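(* Let $\theta$ be an irrational number whose best rational approximants $(p_n/q_n)_{n\ge0}$ satisfy $\lim_{n\to\infty} q_n^{-1}\log q_{n+1}=+\infty$. Let $S$ be a countable dense subset of $\mathbb{C}\times\{z\in\mathbb{C}: |z|>1\}$. Then there exist a subsequence $q'=(q'_n)_{n\ge0}$ of $(q_n)_{n\ge0}$ and a dense $G_\delta$-subset $E_2\subset l^\infty$ such that for every $u\in E_2$, the map $A_{\theta,q',u}$ is a holomorphic automorphism of $\mathbb{C}^2$ with the following properties: (i) $A_{\theta,q',u}$ maps $\mathbb{C}\times\Delta$ onto itself and is holomorphically conjugate on $\mathbb{C}\times\Delta$ to the rotation $R_\theta(w,z)=(e^{2\pi i\theta}w,e^{2\pi i\theta}z)$, i.e. there is a biholomorphism $\Psi$ of $\mathbb{C}\times\Delta$ with $A_{\theta,q',u}=\Psi^{-1}\circ R_\theta\circ\Psi$ there; (ii) for every $(w,z)\in\mathbb{C}\times\{|z|>1\}$ the forward orbit $(A_{\theta,q',u}^{\circ N}(w,z))_{N\ge0}$ is unbounded and recurrent (i.e. $\liminf_{N\to\infty}\|A_{\theta,q',u}^{\circ N}(w,z)-(w,z)\|=0$); (iii) for every $(w,z)\in S$, the sequence $(\|\mathrm{D}A_{\theta,q',u}^{\circ N}(w,z)\|)_{N\ge0}$ is unbounded.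
   Context: For an irrational real $\theta=a_0+\cfrac{1}{a_1+\cfrac{1}{a_2+\cdots}}$ (with $a_0\in\mathbb{Z}$, $a_i\ge1$ integers for $i\ge1$), the best rational approximants are $p_n/q_n=a_0+\cfrac{1}{a_1+\cdots+\cfrac{1}{a_n}}$, $n\ge0$, with $\gcd(p_n,q_n)=1$ and $q_n\ge0$; equivalently $p_{-2}=q_{-1}=0$, $p_{-1}=q_{-2}=1$, $q_{n+1}=a_{n+1}q_n+q_{n-1}$, $p_{n+1}=a_{n+1}p_n+p_{n-1}$. A subsequence $q'=(q'_n)_{n\ge0}$ of $(q_n)$ means $q'_n=q_{k_n}$ for a strictly increasing sequence of indices $k_n$. $l^\infty$ is the complex Banach space of bounded complex sequences $u=(u_m)_{m\ge0}$ with norm $\|u\|_\infty=\sup_m|u_m|$. $\Delta=\{z\in\mathbb{C}:|z|<1\}$. For $\mu\in\mathbb{R}$, a subsequence $q'$ and $u\in l^\infty$, define the power series $\varphi_{\mu,q',u}(z)=z e^{2\pi i\mu}\sum_{n=0}^\infty u_{q'_n}(1-e^{2\pi i q'_n\mu})z^{q'_n}$ (here $u_{q'_n}$ is the $q'_n$-th term of $u$), and $A_{\mu,q',u}(w,z)=(e^{2\pi i\mu}w+\varphi_{\mu,q',u}(z),\,e^{2\pi i\mu}z)$ wherever the series converges. *)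

theory Defs
  imports "HOL-Analysis.Analysis"
begin

fun cf_rem :: "real \<Rightarrow> nat \<Rightarrow> real" where
  "cf_rem \<theta> 0 = \<theta>"
| "cf_rem \<theta> (Suc n) = 1 / (cf_rem \<theta> n - of_int \<lfloor>cf_rem \<theta> n\<rfloor>)"

definition cf_a :: "real \<Rightarrow> nat \<Rightarrow> int" where
  "cf_a \<theta> n = \<lfloor>cf_rem \<theta> n\<rfloor>"

text \<open>Denominators of the convergents: q_0 = 1, q_1 = a_1, q_(n+2) = a_(n+2) q_(n+1) + q_n
  (equivalent to q_(-2) = 1, q_(-1) = 0, q_(n+1) = a_(n+1) q_n + q_(n-1)).\<close>
fun cf_q :: "real \<Rightarrow> nat \<Rightarrow> nat" where
  "cf_q \<theta> 0 = 1"
| "cf_q \<theta> (Suc 0) = nat (cf_a \<theta> 1)"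
| "cf_q \<theta> (Suc (Suc n)) = nat (cf_a \<theta> (Suc (Suc n))) * cf_q \<theta> (Suc n) + cf_q \<theta> n"

text \<open>l^infinity = bounded complex sequences with the sup norm, realised as bcontfun on nat.\<close>
type_synonym linf = "nat \<Rightarrow>\<^sub>C complex"

definition phi_term :: "real \<Rightarrow> (nat \<Rightarrow> nat) \<Rightarrow> linf \<Rightarrow> complex \<Rightarrow> nat \<Rightarrow> complex" where
  "phi_term \<mu> q' u z n =
     apply_bcontfun u (q' n) * (1 - exp (2 * pi * \<i> * of_nat (q' n) * of_real \<mu>)) * z ^ (q' n)"

definition phi :: "real \<Rightarrow> (nat \<Rightarrow> nat) \<Rightarrow> linf \<Rightarrow> complex \<Rightarrow> complex" where
  "phi \<mu> q' u z = z * exp (2 * pi * \<i> * of_real \<mu>) * (\<Sum>n. phi_term \<mu> q' u z n)"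

definition A_map :: "real \<Rightarrow> (nat \<Rightarrow> nat) \<Rightarrow> linf \<Rightarrow> complex \<times> complex \<Rightarrow> complex \<times> complex" where
  "A_map \<mu> q' u p = (exp (2 * pi * \<i> * of_real \<mu>) * fst p + phi \<mu> q' u (snd p),
                     exp (2 * pi * \<i> * of_real \<mu>) * snd p)"

definition rot2 :: "real \<Rightarrow> complex \<times> complex \<Rightarrow> complex \<times> complex" where
  "rot2 \<theta> p = (exp (2 * pi * \<i> * of_real \<theta>) * fst p, exp (2 * pi * \<i> * of_real \<theta>) * snd p)"

definition cmul2 :: "complex \<Rightarrow> complex \<times> complex \<Rightarrow> complex \<times> complex" where
  "cmul2 c v = (c * fst v, c * snd v)"

definition holo2_on :: "(complex \<times> complex \<Rightarrow> complex \<times> complex) \<Rightarrow> (complex \<times> complex) set \<Rightarrow> bool" where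
  "holo2_on f U \<longleftrightarrow> open U \<and>
     (\<forall>x\<in>U. \<exists>D. (f has_derivative D) (at x) \<and> (\<forall>v. D (cmul2 \<i> v) = cmul2 \<i> (D v)))"

definition biholo2_on :: "(complex \<times> complex \<Rightarrow> complex \<times> complex) \<Rightarrow> (complex \<times> complex) set \<Rightarrow> bool" where
  "biholo2_on f U \<longleftrightarrow> holo2_on f U \<and>
     (\<exists>g. holo2_on g U \<and> f ` U \<subseteq> U \<and> g ` U \<subseteq> U \<and>
          (\<forall>x\<in>U. g (f x) = x) \<and> (\<forall>x\<in>U. f (g x) = x))"

definition holo_aut_C2 :: "(complex \<times> complex \<Rightarrow> complex \<times> complex) \<Rightarrow> bool" where
  "holo_aut_C2 f \<longleftrightarrow> biholo2_on f UNIV"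

definition unit_disc :: "complex set" where "unit_disc = ball 0 1"

end

theory Submission
  imports Defs "HOL-Complex_Analysis.Complex_Analysis"
begin


definition Qc :: "real \<Rightarrow> nat \<Rightarrow> nat" where
  "Qc \<theta> n = (case n of 0 \<Rightarrow> 0 | Suc m \<Rightarrow> cf_q \<theta> m)"

fun Ec :: "real \<Rightarrow> nat \<Rightarrow> real" where
  "Ec \<theta> 0 = -1"
| "Ec \<theta> (Suc 0) = \<theta> - of_int \<lfloor>\<theta>\<rfloor>"
| "Ec \<theta> (Suc (Suc n)) = of_int (cf_a \<theta> (Suc n)) * Ec \<theta> (Suc n) + Ec \<theta> n"

lemma inv_rat: assumes "1 / (x::real) \<in> \<rat>" shows "x \<in> \<rat>"
proof -
  have "x = 1 / (1 / x)" by simp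
  also have "\<dots> \<in> \<rat>" using assms by (rule Rats_divide[OF Rats_1])
  finally show ?thesis .
qed

lemma cf_rem_irr: assumes "\<theta> \<notin> \<rat>" shows "cf_rem \<theta> n \<notin> \<rat>"
proof (induction n)
  case 0 then show ?case using assms by simp
next
  case (Suc n)
  show ?case
  proof
    assume "cf_rem \<theta> (Suc n) \<in> \<rat>"
    then have "1 / (cf_rem \<theta> n - of_int \<lfloor>cf_rem \<theta> n\<rfloor>) \<in> \<rat>" by (simp only: cf_rem.simps)
    then have "cf_rem \<theta> n - of_int \<lfloor>cf_rem \<theta> n\<rfloor> \<in> \<rat>" by (rule inv_rat)
    then have "cf_rem \<theta> n - of_int \<lfloor>cf_rem \<theta> n\<rfloor> + of_int \<lfloor>cf_rem \<theta> n\<rfloor> \<in> \<rat>"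
      by (intro Rats_add) auto
    then show False using Suc by simp
  qed
qed

lemma frac_pos_irr: assumes "x \<notin> \<rat>" shows "0 < x - of_int \<lfloor>x\<rfloor>" "x - of_int \<lfloor>x\<rfloor> < 1"
proof -
  have "x - of_int \<lfloor>x\<rfloor> \<noteq> 0" using assms by (metis Rats_of_int eq_iff_diff_eq_0)
  moreover have "0 \<le> x - of_int \<lfloor>x\<rfloor>" by simp
  ultimately show "0 < x - of_int \<lfloor>x\<rfloor>" by (simp add: less_le)
  show "x - of_int \<lfloor>x\<rfloor> < 1" by linarith
qed

lemma one_less_inv': "0 < (y::real) \<Longrightarrow> y < 1 \<Longrightarrow> 1 < 1 / y"
  by (simp add: less_divide_eq)

lemma cf_rem_gt1: assumes "\<theta> \<notin> \<rat>" shows "1 < cf_rem \<theta> (Suc n)"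
proof -
  have a: "0 < cf_rem \<theta> n - of_int \<lfloor>cf_rem \<theta> n\<rfloor>" "cf_rem \<theta> n - of_int \<lfloor>cf_rem \<theta> n\<rfloor> < 1"
    using frac_pos_irr[OF cf_rem_irr[OF assms]] by auto
  have "1 < 1 / (cf_rem \<theta> n - of_int \<lfloor>cf_rem \<theta> n\<rfloor>)" using a by (rule one_less_inv')
  then show ?thesis by (simp only: cf_rem.simps)
qed

lemma cf_a_ge1: assumes "\<theta> \<notin> \<rat>" shows "1 \<le> cf_a \<theta> (Suc n)"
  using cf_rem_gt1[OF assms, of n] unfolding cf_a_def by linarith

lemma Qc_rec: assumes "\<theta> \<notin> \<rat>"
  shows "real (Qc \<theta> (Suc (Suc n))) = of_int (cf_a \<theta> (Suc n)) * real (Qc \<theta> (Suc n)) + real (Qc \<theta> n)"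
proof (cases n)
  case 0
  then show ?thesis using cf_a_ge1[OF assms, of 0] by (simp add: Qc_def)
next
  case (Suc m)
  then show ?thesis using cf_a_ge1[OF assms, of "Suc m"] by (simp add: Qc_def)
qed

lemma Qc_0 [simp]: "Qc \<theta> 0 = 0" and Qc_1 [simp]: "Qc \<theta> (Suc 0) = 1"
  by (simp_all add: Qc_def)

lemma Ec_rat: assumes "\<theta> \<notin> \<rat>"
  shows "Ec \<theta> (Suc n) = - Ec \<theta> n / cf_rem \<theta> (Suc n)"
proof (induction n)
  case 0
  then show ?case by simp
next
  case (Suc n)
  have r: "cf_rem \<theta> (Suc n) > 0" using cf_rem_gt1[OF assms, of n] by linarith
  have e: "Ec \<theta> n = - cf_rem \<theta> (Suc n) * Ec \<theta> (Suc n)" using Suc r by (simp add: field_simps del: cf_rem.simps)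
  have r2: "1 / cf_rem \<theta> (Suc (Suc n)) = cf_rem \<theta> (Suc n) - of_int (cf_a \<theta> (Suc n))"
    by (simp add: cf_a_def)
  have "Ec \<theta> (Suc (Suc n)) = - (cf_rem \<theta> (Suc n) - of_int (cf_a \<theta> (Suc n))) * Ec \<theta> (Suc n)"
    by (simp add: e algebra_simps)
  also have "\<dots> = - (1 / cf_rem \<theta> (Suc (Suc n))) * Ec \<theta> (Suc n)" by (simp only: r2)
  also have "\<dots> = - Ec \<theta> (Suc n) / cf_rem \<theta> (Suc (Suc n))" by (simp del: cf_rem.simps)
  finally show ?case .
qed

lemma Ec_det: assumes "\<theta> \<notin> \<rat>"
  shows "Ec \<theta> n * real (Qc \<theta> (Suc n)) - Ec \<theta> (Suc n) * real (Qc \<theta> n) = (-1) ^ Suc n"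
proof (induction n)
  case 0 then show ?case by simp
next
  case (Suc n)
  show ?case using Suc by (simp add: Qc_rec[OF assms] algebra_simps)
qed

lemma Ec_int: assumes "\<theta> \<notin> \<rat>"
  shows "real (Qc \<theta> n) * \<theta> - Ec \<theta> n \<in> \<int> \<and> real (Qc \<theta> (Suc n)) * \<theta> - Ec \<theta> (Suc n) \<in> \<int>"
proof (induction n)
  case 0 then show ?case by simp
next
  case (Suc n)
  have "real (Qc \<theta> (Suc (Suc n))) * \<theta> - Ec \<theta> (Suc (Suc n)) =
     of_int (cf_a \<theta> (Suc n)) * (real (Qc \<theta> (Suc n)) * \<theta> - Ec \<theta> (Suc n)) + (real (Qc \<theta> n) * \<theta> - Ec \<theta> n)"
    by (simp add: Qc_rec[OF assms] algebra_simps)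
  also have "\<dots> \<in> \<int>" using Suc by (intro Ints_add Ints_mult) auto
  finally show ?case using Suc by simp
qed

lemma aux_abs: "(E1::real) = - E0 / r \<Longrightarrow> E0 * Q1 - E1 * Q0 = c \<Longrightarrow> \<bar>c\<bar> = 1 \<Longrightarrow> 0 \<le> Q1 + Q0 / r
  \<Longrightarrow> \<bar>E0\<bar> * (Q1 + Q0 / r) = 1"
proof -
  assume a: "E1 = - E0 / r" "E0 * Q1 - E1 * Q0 = c" "\<bar>c\<bar> = 1" "0 \<le> Q1 + Q0 / r"
  have "E0 * (Q1 + Q0 / r) = c" using a(1,2) by (simp add: algebra_simps)
  then have "\<bar>E0 * (Q1 + Q0 / r)\<bar> = 1" using a(3) by simp
  then show ?thesis using a(4) by (simp add: abs_mult)
qed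

lemma Ec_abs: assumes "\<theta> \<notin> \<rat>"
  shows "\<bar>Ec \<theta> m\<bar> * (real (Qc \<theta> (Suc m)) + real (Qc \<theta> m) / cf_rem \<theta> (Suc m)) = 1"
proof (rule aux_abs[OF Ec_rat[OF assms, of m] Ec_det[OF assms, of m]])
  show "\<bar>(-1::real) ^ Suc m\<bar> = 1" by simp
  have "0 < cf_rem \<theta> (Suc m)" using cf_rem_gt1[OF assms, of m] by linarith
  then show "0 \<le> real (Qc \<theta> (Suc m)) + real (Qc \<theta> m) / cf_rem \<theta> (Suc m)"
    by (intro add_nonneg_nonneg divide_nonneg_pos) auto
qed

lemma cf_approx:
  assumes irr: "\<theta> \<notin> \<rat>" and pos: "0 < cf_q \<theta> (Suc n)" and le: "cf_q \<theta> n \<le> cf_q \<theta> (Suc n)"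
  shows "real (cf_q \<theta> n) * \<theta> - Ec \<theta> (Suc n) \<in> \<int>"
    "\<bar>Ec \<theta> (Suc n)\<bar> \<le> 1 / real (cf_q \<theta> (Suc n))"
    "1 / (2 * real (cf_q \<theta> (Suc n))) \<le> \<bar>Ec \<theta> (Suc n)\<bar>"
proof -
  show "real (cf_q \<theta> n) * \<theta> - Ec \<theta> (Suc n) \<in> \<int>"
    using Ec_int[OF irr, of n] by (simp add: Qc_def)
  define T where "T = real (cf_q \<theta> (Suc n))"
  define s where "s = real (cf_q \<theta> n)"
  define r where "r = cf_rem \<theta> (Suc (Suc n))"
  define e where "e = \<bar>Ec \<theta> (Suc n)\<bar>"
  have r1: "1 < r" unfolding r_def using cf_rem_gt1[OF irr] .
  have eq: "e * (T + s / r) = 1" using Ec_abs[OF irr, of "Suc n"] unfolding Qc_def e_def T_def s_def r_def by simp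
  have Tp: "0 < T" using pos by (simp add: T_def)
  have s0: "0 \<le> s" by (simp add: s_def)
  have sT: "s \<le> T" using le by (simp add: s_def T_def)
  have e0: "0 \<le> e" by (simp add: e_def)
  have sr0: "0 \<le> s / r" using r1 s0 by simp
  have "s / r \<le> s / 1" by (rule divide_left_mono) (use r1 s0 in auto)
  then have srT: "s / r \<le> T" using sT by simp
  have eq2: "e * T + e * (s / r) = 1" using eq by (simp add: distrib_left)
  have p1: "0 \<le> e * (s / r)" using e0 sr0 by (rule mult_nonneg_nonneg)
  have p2: "e * (s / r) \<le> e * T" using srT e0 by (rule mult_left_mono)
  have "e * T \<le> 1" using eq2 p1 by linarith
  then have "e \<le> 1 / T" using Tp by (simp add: le_divide_eq)
  then show "\<bar>Ec \<theta> (Suc n)\<bar> \<le> 1 / real (cf_q \<theta> (Suc n))"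
    by (simp add: e_def T_def)
  have "1 \<le> e * T * 2" using eq2 p2 by linarith
  then have "1 / (2 * T) \<le> e" using Tp by (simp add: divide_le_eq mult.commute mult.left_commute)
  then show "1 / (2 * real (cf_q \<theta> (Suc n))) \<le> \<bar>Ec \<theta> (Suc n)\<bar>"
    by (simp add: e_def T_def)
qed




lemma norm_1_minus_exp_sq: "(cmod (1 - exp (\<i> * complex_of_real y)))^2 = 2 - 2 * cos y"
proof -
  have "(cmod (1 - exp (\<i> * complex_of_real y)))^2 = (1 - cos y)^2 + (sin y)^2"
    by (simp only: cmod_power2) (simp add: Re_exp Im_exp)
  then show ?thesis
    by (simp add: power2_eq_square algebra_simps)
qed

lemma norm_1_minus_exp_le: "cmod (1 - exp (\<i> * complex_of_real y)) \<le> \<bar>y\<bar>"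
proof -
  have c: "cos y = 1 - 2 * (sin (y/2))^2" using cos_double_sin[of "y/2"] by simp
  have "\<bar>sin (y/2)\<bar> \<le> \<bar>y/2\<bar>" by (rule abs_sin_x_le_abs_x)
  then have "(sin (y/2))^2 \<le> (y/2)^2"
    by (metis abs_ge_zero power2_abs power_mono)
  then have "2 - 2 * cos y \<le> y^2" unfolding c by (simp add: power2_eq_square)
  then have "(cmod (1 - exp (\<i> * complex_of_real y)))^2 \<le> \<bar>y\<bar>^2" by (simp add: norm_1_minus_exp_sq)
  then show ?thesis using abs_ge_zero power2_le_imp_le by blast
qed

lemma norm_1_minus_exp_ge: "cos y \<le> 0 \<Longrightarrow> 1 \<le> cmod (1 - exp (\<i> * complex_of_real y))"
proof -
  assume "cos y \<le> 0"
  then have "1^2 \<le> (cmod (1 - exp (\<i> * complex_of_real y)))^2" by (simp add: norm_1_minus_exp_sq)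
  then show ?thesis using norm_ge_zero power2_le_imp_le by blast
qed

lemma growth_ev:
  assumes growth: "filterlim (\<lambda>n. ln (real (cf_q \<theta> (Suc n))) / real (cf_q \<theta> n)) at_top sequentially"
  shows "\<forall>\<^sub>F j in sequentially. 1 \<le> cf_q \<theta> j \<and> 2 ^ (M * cf_q \<theta> j) \<le> cf_q \<theta> (Suc j)"
proof -
  define c where "c = real M * ln 2 + 1"
  have cpos: "0 < c" unfolding c_def by (simp add: add_nonneg_pos)
  have "\<forall>\<^sub>F j in sequentially. c \<le> ln (real (cf_q \<theta> (Suc j))) / real (cf_q \<theta> j)"
    using growth by (simp add: filterlim_at_top)
  then show ?thesis
  proof eventually_elim
    case (elim j)
    define a where "a = cf_q \<theta> j"
    define b where "b = cf_q \<theta> (Suc j)"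
    have el: "c \<le> ln (real b) / real a" using elim by (simp add: a_def b_def)
    have a0: "a \<noteq> 0"
    proof
      assume "a = 0"
      then have "ln (real b) / real a = 0" by simp
      then show False using el cpos by linarith
    qed
    then have a1: "1 \<le> a" by simp
    have l: "c * real a \<le> ln (real b)" using el a0 by (simp add: le_divide_eq)
    have "0 < c * real a" using cpos a1 by simp
    then have "0 < ln (real b)" using l by linarith
    then have b0: "0 < real b" by (cases "b = 0") auto
    have "real M * ln 2 * real a \<le> c * real a" unfolding c_def by (simp add: distrib_right)
    then have "real (M * a) * ln 2 \<le> ln (real b)" using l by (simp add: algebra_simps)
    then have "exp (real (M * a) * ln 2) \<le> exp (ln (real b))" by simp
    moreover have "exp (real (M * a) * ln 2) = (2::real) ^ (M * a)"
      by (simp only: exp_of_nat_mult) simp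
    ultimately have "real (2 ^ (M * a)) \<le> real b"
      using b0 by simp
    then have "2 ^ (M * a) \<le> b" by (simp only: of_nat_le_iff)
    then show ?case using a1 by (simp add: a_def b_def)
  qed
qed

lemma growth_big:
  assumes growth: "filterlim (\<lambda>n. ln (real (cf_q \<theta> (Suc n))) / real (cf_q \<theta> n)) at_top sequentially"
  shows "\<forall>\<^sub>F j in sequentially. B \<le> cf_q \<theta> j"
proof -
  have "\<forall>\<^sub>F j in sequentially. B \<le> cf_q \<theta> (Suc j)"
    using growth_ev[OF growth, of B]
  proof eventually_elim
    case (elim j)
    have "B < 2 ^ B" by (rule less_exp)
    also have "\<dots> \<le> 2 ^ (B * cf_q \<theta> j)" using elim by (intro power_increasing) auto
    finally show ?case using elim by linarith
  qed
  then show ?thesis by (rule eventually_sequentially_Suc[THEN iffD1])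
qed

lemma subseq_exists:
  assumes growth: "filterlim (\<lambda>n. ln (real (cf_q \<theta> (Suc n))) / real (cf_q \<theta> n)) at_top sequentially"
  shows "\<exists>k. strict_mono k \<and> (\<forall>n. 1 \<le> cf_q \<theta> (k n) \<and> 2 ^ ((n+3) * cf_q \<theta> (k n)) \<le> cf_q \<theta> (Suc (k n))
     \<and> cf_q \<theta> (Suc (k n)) \<le> cf_q \<theta> (k (Suc n)))"
proof -
  define P where "P = (\<lambda>n x. 1 \<le> cf_q \<theta> x \<and> 2 ^ ((n+3) * cf_q \<theta> x) \<le> cf_q \<theta> (Suc x))"
  define Q where "Q = (\<lambda>(n::nat) x y. x < y \<and> cf_q \<theta> (Suc x) \<le> cf_q \<theta> y)"
  have "\<exists>f. \<forall>n. P n (f n) \<and> Q n (f n) (f (Suc n))"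
  proof (rule dependent_nat_choice)
    obtain N where "\<forall>j\<ge>N. 1 \<le> cf_q \<theta> j \<and> 2 ^ (3 * cf_q \<theta> j) \<le> cf_q \<theta> (Suc j)"
      using growth_ev[OF growth, of 3] unfolding eventually_sequentially by blast
    then show "\<exists>x. P 0 x" unfolding P_def by (intro exI[of _ N]) auto
  next
    fix x n assume "P n x"
    have "\<forall>\<^sub>F y in sequentially. P (Suc n) y \<and> Q n x y"
      using growth_ev[OF growth, of "Suc n + 3"] growth_big[OF growth, of "cf_q \<theta> (Suc x)"]
        eventually_gt_at_top[of x]
      unfolding P_def Q_def by eventually_elim auto
    then obtain N where "\<forall>y\<ge>N. P (Suc n) y \<and> Q n x y" unfolding eventually_sequentially by blast
    then show "\<exists>y. P (Suc n) y \<and> Q n x y" by blast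
  qed
  then obtain f where f: "\<forall>n. P n (f n) \<and> Q n (f n) (f (Suc n))" by blast
  have "strict_mono f" using f unfolding Q_def by (auto intro: strict_monoI_Suc)
  then show ?thesis using f unfolding P_def Q_def by blast
qed




lemma nat_sq_le_4pow: "(m + 1) * m \<le> (4::nat) ^ m"
proof -
  have "m + 1 \<le> 2 ^ m" using less_exp[of m] by linarith
  moreover have "m \<le> 2 ^ m" using less_exp[of m] by simp
  ultimately have "(m + 1) * m \<le> 2 ^ m * 2 ^ m" by (rule mult_le_mono)
  also have "\<dots> = 4 ^ m" by (simp flip: power_mult_distrib)
  finally show ?thesis .
qed

locale L =
  fixes th :: real and s T :: "nat \<Rightarrow> nat" and d :: "nat \<Rightarrow> real"
  assumes s_ge1: "\<And>n. 1 \<le> s n"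
    and T_big: "\<And>n. 2 ^ ((n+3) * s n) \<le> T n"
    and T_s: "\<And>n. T n \<le> s (Suc n)"
    and s_int: "\<And>n. real (s n) * th - d n \<in> \<int>"
    and d_up: "\<And>n. \<bar>d n\<bar> \<le> 1 / real (T n)"
    and d_low: "\<And>n. 1 / (2 * real (T n)) \<le> \<bar>d n\<bar>"
begin

lemma s4_le_T: "4 * s n \<le> T n"
proof -
  have "4 * s n < 4 * 2 ^ s n" using less_exp[of "s n"] by simp
  also have "\<dots> = 2 ^ (s n + 2)" by simp
  also have "\<dots> \<le> 2 ^ ((n+3) * s n)"
  proof (rule power_increasing)
    have "3 * s n \<le> (n+3) * s n" by (rule mult_le_mono1) simp
    then show "s n + 2 \<le> (n+3) * s n" using s_ge1[of n] by linarith
  qed simp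
  also have "\<dots> \<le> T n" by (rule T_big)
  finally show ?thesis by simp
qed

lemma s_le_T: "s n \<le> T n" using s4_le_T[of n] by simp
lemma T_pos: "0 < T n" using s4_le_T[of n] s_ge1[of n] by simp
lemma s_Suc: "s n < s (Suc n)" using s4_le_T[of n] s_ge1[of n] T_s[of n] by simp
lemma s_strict: "strict_mono s" by (rule strict_monoI_Suc) (rule s_Suc)
lemma s_ge_n: "n \<le> s n" by (rule seq_suble[OF s_strict])
lemma T_Suc: "T n \<le> T (Suc n)" using T_s[of n] s_le_T[of "Suc n"] by simp
lemma T_mono: "m \<le> n \<Longrightarrow> T m \<le> T n" by (rule lift_Suc_mono_le[of T]) (auto intro: T_Suc)
lemma s_mono: "m \<le> n \<Longrightarrow> s m \<le> s n" using s_strict by (simp add: strict_mono_less_eq)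
lemma T_le_s: "m < n \<Longrightarrow> T m \<le> s n"
  using T_s[of m] s_mono[of "Suc m" n] by simp
lemma s_le_T': "m \<le> n \<Longrightarrow> s m \<le> T n" using s_le_T[of m] T_mono[of m n] by simp

lemma d_up': "\<bar>d n\<bar> \<le> 1 / 4" 
proof -
  have "\<bar>d n\<bar> \<le> 1 / real (T n)" by (rule d_up)
  also have "\<dots> \<le> 1 / 4"
  proof -
    have "4 \<le> T n" using s4_le_T[of n] s_ge1[of n] by linarith
    then have "(4::real) \<le> real (T n)" by simp
    then show ?thesis by (intro divide_left_mono) auto
  qed
  finally show ?thesis .
qed

definition lam :: complex where "lam = exp (2 * pi * \<i> * complex_of_real th)"

lemma norm_lam [simp]: "cmod lam = 1"
  unfolding lam_def by (simp add: norm_exp_eq_Re)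

lemma norm_lam_pow [simp]: "cmod (lam ^ N) = 1"
  by (simp add: norm_power)

lemma lam_nz [simp]: "lam \<noteq> 0" unfolding lam_def by simp

lemma lam_pow: "lam ^ (M * s n) = exp (\<i> * complex_of_real (2 * pi * real M * d n))"
proof -
  obtain m where m: "real (s n) * th - d n = of_int m" using s_int[of n] by (auto elim: Ints_cases)
  have "lam ^ (M * s n) = exp (of_nat (M * s n) * (2 * pi * \<i> * complex_of_real th))"
    unfolding lam_def by (simp only: exp_of_nat_mult)
  also have "of_nat (M * s n) * (2 * pi * \<i> * complex_of_real th)
      = \<i> * complex_of_real (2 * pi * real M * (real (s n) * th))" by simp
  also have "real (s n) * th = d n + of_int m" using m by simp
  also have "\<i> * complex_of_real (2 * pi * real M * (d n + of_int m)) =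
      \<i> * complex_of_real (2 * pi * real M * d n) + \<i> * (of_int (int M * m) * (of_real pi * 2))"
    by (simp add: algebra_simps)
  also have "exp \<dots> = exp (\<i> * complex_of_real (2 * pi * real M * d n))"
    by (rule exp_plus_2pin)
  finally show ?thesis .
qed

lemma lam_pow_bound: "cmod (1 - lam ^ (M * s n)) \<le> 2 * pi * real M * \<bar>d n\<bar>"
proof -
  have "cmod (1 - lam ^ (M * s n)) \<le> \<bar>2 * pi * real M * d n\<bar>"
    unfolding lam_pow by (rule norm_1_minus_exp_le)
  also have "\<dots> = 2 * pi * real M * \<bar>d n\<bar>" by (simp add: abs_mult)
  finally show ?thesis .
qed

lemma lam_pow_bound': "cmod (1 - lam ^ (M * s n)) \<le> 2 * pi * real M / real (T n)"
proof -
  have "cmod (1 - lam ^ (M * s n)) \<le> 2 * pi * real M * \<bar>d n\<bar>" by (rule lam_pow_bound)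
  also have "\<dots> \<le> 2 * pi * real M * (1 / real (T n))"
    by (intro mult_left_mono d_up) auto
  finally show ?thesis by simp
qed

definition H :: "real \<Rightarrow> nat \<Rightarrow> real" where
  "H R n = real (s n + 1) * R ^ (s n + 1) * real (s n) / real (T n)"

lemma H_nonneg: "0 \<le> R \<Longrightarrow> 0 \<le> H R n"
  unfolding H_def by simp

lemma H_bound:
  assumes R1: "1 \<le> R" and RN: "R \<le> 2 ^ n"
  shows "H R n \<le> R * (1/2) ^ n"
proof -
  define m where "m = s n"
  have m1: "1 \<le> m" and mn: "n \<le> m" using s_ge1 s_ge_n by (auto simp: m_def)
  have Tp: "0 < real (T n)" using T_pos by simp
  have T2: "(2 ^ (n+3)) ^ m \<le> real (T n)"
  proof -
    have "real (2 ^ ((n+3) * m)) \<le> real (T n)" using T_big[of n] unfolding m_def by (simp only: of_nat_le_iff)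
    then show ?thesis by (simp add: power_mult)
  qed
  have q: "real ((m + 1) * m) \<le> 4 ^ m"
  proof -
    have "real ((m + 1) * m) \<le> real (4 ^ m)" using nat_sq_le_4pow[of m] by (simp only: of_nat_le_iff)
    then show ?thesis by simp
  qed
  have "H R n = real ((m + 1) * m) * R * R ^ m / real (T n)"
    unfolding H_def m_def by (simp add: algebra_simps)
  also have "\<dots> \<le> 4 ^ m * R * R ^ m / (2 ^ (n+3)) ^ m"
  proof (rule frac_le)
    show "0 \<le> 4 ^ m * R * R ^ m" using R1 by simp
    show "real ((m + 1) * m) * R * R ^ m \<le> 4 ^ m * R * R ^ m"
      using q R1 by (intro mult_right_mono) auto
    show "0 < ((2::real) ^ (n + 3)) ^ m" by simp
    show "((2::real) ^ (n + 3)) ^ m \<le> real (T n)" using T2 by simp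
  qed
  also have "\<dots> = R * (4 * R / 2 ^ (n+3)) ^ m"
    by (simp add: power_mult_distrib power_divide)
  also have "\<dots> \<le> R * (1/2) ^ m"
  proof -
    have "4 * R / 2 ^ (n+3) \<le> 1/2"
    proof -
      have "(2::real) ^ (n+3) = 8 * 2 ^ n" by (simp add: power_add)
      then show ?thesis using RN by (simp add: divide_le_eq)
    qed
    moreover have "0 \<le> 4 * R / 2 ^ (n+3)" using R1 by simp
    ultimately show ?thesis using R1 by (intro mult_left_mono power_mono) auto
  qed
  also have "\<dots> \<le> R * (1/2) ^ n"
    using R1 mn by (intro mult_left_mono power_decreasing) auto
  finally show ?thesis .
qed

lemma summable_H: assumes R1: "1 \<le> R" shows "summable (H R)"
proof -
  obtain N where N: "R < 2 ^ N" using real_arch_pow[of 2 R] by auto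
  have "\<forall>\<^sub>F n in sequentially. norm (H R n) \<le> R * (1/2) ^ n"
    unfolding eventually_sequentially
  proof (intro exI allI impI)
    fix n assume "N \<le> n"
    then have "R \<le> 2 ^ n" using N by (smt (verit) power_increasing one_le_numeral)
    then show "norm (H R n) \<le> R * (1/2) ^ n"
      using H_bound[OF R1] H_nonneg[of R n] R1 by simp
  qed
  moreover have "summable (\<lambda>n. R * (1/2::real) ^ n)"
    by (intro summable_mult summable_geometric) simp
  ultimately show ?thesis by (rule summable_comparison_test_ev)
qed

end



context L begin

definition c :: "linf \<Rightarrow> nat \<Rightarrow> complex" where "c u n = apply_bcontfun u (s n)"

lemma norm_c: "cmod (c u n) \<le> norm u" unfolding c_def by (rule norm_bounded)

definition Gt :: "linf \<Rightarrow> nat \<Rightarrow> complex \<Rightarrow> nat \<Rightarrow> complex" where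
  "Gt u N z n = c u n * z ^ (s n + 1) * (1 - lam ^ (N * s n))"
definition Gd :: "linf \<Rightarrow> nat \<Rightarrow> complex \<Rightarrow> nat \<Rightarrow> complex" where
  "Gd u N z n = c u n * of_nat (s n + 1) * z ^ s n * (1 - lam ^ (N * s n))"
definition G :: "linf \<Rightarrow> nat \<Rightarrow> complex \<Rightarrow> complex" where "G u N z = suminf (Gt u N z)"
definition G' :: "linf \<Rightarrow> nat \<Rightarrow> complex \<Rightarrow> complex" where "G' u N z = suminf (Gd u N z)"

lemma H_ge_pow1: "1 \<le> R \<Longrightarrow> R ^ (s n + 1) / real (T n) \<le> H R n"
proof -
  assume R: "1 \<le> R"
  have a: "(1::real) \<le> real (s n + 1)" and b: "(1::real) \<le> real (s n)" using s_ge1[of n] by auto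
  have "1 * 1 \<le> real (s n + 1) * real (s n)" using a b by (rule mult_mono) auto
  then have "R ^ (s n + 1) * 1 \<le> R ^ (s n + 1) * (real (s n + 1) * real (s n))"
    using R by (intro mult_left_mono) auto
  then have "R ^ (s n + 1) \<le> real (s n + 1) * R ^ (s n + 1) * real (s n)"
    by (simp add: ac_simps)
  then show ?thesis unfolding H_def using T_pos[of n] by (intro divide_right_mono) auto
qed

lemma H_ge_pow2: "1 \<le> R \<Longrightarrow> real (s n + 1) * R ^ s n / real (T n) \<le> H R n"
proof -
  assume R: "1 \<le> R"
  have "R ^ s n \<le> R ^ (s n + 1) * real (s n)"
  proof -
    have "R ^ s n \<le> R ^ (s n + 1)" using R by (intro power_increasing) auto
    also have "\<dots> = R ^ (s n + 1) * 1" by simp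
    also have "\<dots> \<le> R ^ (s n + 1) * real (s n)"
      by (rule mult_left_mono) (use s_ge1[of n] R in auto)
    finally show ?thesis .
  qed
  then have "real (s n + 1) * R ^ s n \<le> real (s n + 1) * R ^ (s n + 1) * real (s n)"
    by (metis mult.assoc mult_left_mono of_nat_0_le_iff)
  then show ?thesis unfolding H_def using T_pos[of n] by (intro divide_right_mono) auto
qed

lemma Gt_bound:
  assumes z: "cmod z \<le> R" and R: "1 \<le> R"
  shows "cmod (Gt u N z n) \<le> norm u * (2 * pi * real N) * H R n"
proof -
  have "cmod (Gt u N z n) = cmod (c u n) * cmod z ^ (s n + 1) * cmod (1 - lam ^ (N * s n))"
    unfolding Gt_def by (simp add: norm_mult norm_power)
  also have "\<dots> \<le> norm u * R ^ (s n + 1) * (2 * pi * real N / real (T n))"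
    using z R by (intro mult_mono norm_c power_mono lam_pow_bound') auto
  also have "\<dots> = norm u * (2 * pi * real N) * (R ^ (s n + 1) / real (T n))" by simp
  also have "\<dots> \<le> norm u * (2 * pi * real N) * H R n"
    using H_ge_pow1[OF R] by (intro mult_left_mono) auto
  finally show ?thesis .
qed

lemma Gd_bound:
  assumes z: "cmod z \<le> R" and R: "1 \<le> R"
  shows "cmod (Gd u N z n) \<le> norm u * (2 * pi * real N) * H R n"
proof -
  have "cmod (Gd u N z n) = cmod (c u n) * (real (s n + 1) * cmod z ^ s n) * cmod (1 - lam ^ (N * s n))"
    by (simp only: Gd_def norm_mult norm_power norm_of_nat)
  also have "\<dots> \<le> norm u * (real (s n + 1) * R ^ s n) * (2 * pi * real N / real (T n))"
    using z R by (intro mult_mono norm_c power_mono lam_pow_bound' mult_left_mono) auto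
  also have "\<dots> = norm u * (2 * pi * real N) * (real (s n + 1) * R ^ s n / real (T n))" by simp
  also have "\<dots> \<le> norm u * (2 * pi * real N) * H R n"
    using H_ge_pow2[OF R] by (intro mult_left_mono) auto
  finally show ?thesis .
qed

lemma summable_bound: "1 \<le> R \<Longrightarrow> summable (\<lambda>n. norm u * (2 * pi * real N) * H R n)"
  by (intro summable_mult summable_H)

lemma Gt_summable: "summable (Gt u N z)"
proof -
  define R where "R = max 1 (cmod z)"
  have R: "1 \<le> R" "cmod z \<le> R" by (auto simp: R_def)
  show ?thesis
    by (rule summable_comparison_test[OF _ summable_bound[OF R(1)]])
       (use Gt_bound[OF R(2) R(1)] in auto)
qed

lemma Gd_summable: "summable (Gd u N z)"
proof -
  define R where "R = max 1 (cmod z)"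
  have R: "1 \<le> R" "cmod z \<le> R" by (auto simp: R_def)
  show ?thesis
    by (rule summable_comparison_test[OF _ summable_bound[OF R(1)]])
       (use Gd_bound[OF R(2) R(1)] in auto)
qed

lemma Gt_deriv: "((\<lambda>z. Gt u N z n) has_field_derivative Gd u N z n) (at z)"
proof -
  have "((\<lambda>z. z ^ (s n + 1)) has_field_derivative of_nat (s n + 1) * (1 * z ^ (s n + 1 - Suc 0))) (at z)"
    by (rule DERIV_power[OF DERIV_ident])
  then have "((\<lambda>z. z ^ (s n + 1)) has_field_derivative of_nat (s n + 1) * z ^ s n) (at z)"
    by simp
  then have "((\<lambda>z. c u n * z ^ (s n + 1) * (1 - lam ^ (N * s n))) has_field_derivative
      c u n * (of_nat (s n + 1) * z ^ s n) * (1 - lam ^ (N * s n))) (at z)"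
    by (intro DERIV_cmult_right DERIV_cmult)
  then show ?thesis unfolding Gt_def Gd_def by (simp add: mult.assoc)
qed

lemma G_props: "\<forall>z. (Gt u N z sums G u N z) \<and> (Gd u N z sums G' u N z) \<and>
   (G u N has_field_derivative G' u N z) (at z)"
proof -
  have "\<exists>g g'. \<forall>x \<in> UNIV. ((\<lambda>n. Gt u N x n) sums g x) \<and> ((\<lambda>n. Gd u N x n) sums g' x) \<and>
      (g has_field_derivative g' x) (at x)"
  proof (rule series_and_derivative_comparison_local)
    show "open (UNIV :: complex set)" by simp
    show "\<And>n x. x \<in> UNIV \<Longrightarrow> ((\<lambda>z. Gt u N z n) has_field_derivative Gd u N x n) (at x)"
      by (rule Gt_deriv)
    fix x :: complex
    define R where "R = cmod x + 1"
    have R: "1 \<le> R" by (simp add: R_def)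
    show "\<exists>d h. 0 < d \<and> summable h \<and> (\<forall>\<^sub>F n in sequentially. \<forall>y\<in>ball x d \<inter> UNIV. norm (Gt u N y n) \<le> h n)"
    proof (intro exI conjI)
      show "(0::real) < 1" by simp
      show "summable (\<lambda>n. norm u * (2 * pi * real N) * H R n)" by (rule summable_bound[OF R])
      show "\<forall>\<^sub>F n in sequentially. \<forall>y\<in>ball x 1 \<inter> UNIV. norm (Gt u N y n) \<le> norm u * (2 * pi * real N) * H R n"
      proof (intro always_eventually allI ballI)
        fix n y assume "y \<in> ball x 1 \<inter> UNIV"
        then have "cmod (x - y) < 1" by (simp add: dist_norm)
        moreover have "cmod y \<le> cmod x + cmod (x - y)" using norm_triangle_ineq[of x "y - x"]
          by (simp add: norm_minus_commute)
        ultimately have "cmod y \<le> R" unfolding R_def by linarith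
        then show "norm (Gt u N y n) \<le> norm u * (2 * pi * real N) * H R n" by (rule Gt_bound[OF _ R])
      qed
    qed
  qed
  then obtain g g' where gg: "\<forall>x. (Gt u N x sums g x) \<and> (Gd u N x sums g' x) \<and> (g has_field_derivative g' x) (at x)"
    by auto
  have "G u N = g" unfolding G_def using gg by (auto simp: sums_iff)
  moreover have "G' u N = g'" unfolding G'_def using gg by (auto simp: sums_iff)
  ultimately show ?thesis using gg by simp
qed

lemma G_sums: "Gt u N z sums G u N z" using G_props by blast
lemma G'_sums: "Gd u N z sums G' u N z" using G_props by blast
lemma G_deriv: "(G u N has_field_derivative G' u N z) (at z)" using G_props by blast

end



lemma holo2_form:
  assumes U: "open U" and f: "\<And>x. x \<in> U \<Longrightarrow> (f has_field_derivative f' x) (at (snd x))"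
  shows "holo2_on (\<lambda>p. (\<alpha> * fst p + f (snd p), \<beta> * snd p)) U"
  unfolding holo2_on_def
proof (intro conjI ballI exI)
  show "open U" by (rule U)
  fix x assume x: "x \<in> U"
  have d1: "((\<lambda>p. \<alpha> * fst p) has_derivative (\<lambda>v. \<alpha> * fst v)) (at x)"
    by (intro has_derivative_mult_right has_derivative_fst has_derivative_ident)
  have fd: "(f has_derivative (\<lambda>h. f' x * h)) (at (snd x))"
    using f[OF x] by (simp add: has_field_derivative_def)
  have d2: "((\<lambda>p. f (snd p)) has_derivative (\<lambda>v. f' x * snd v)) (at x)"
    using has_derivative_compose[OF has_derivative_snd[OF has_derivative_ident] fd] by simp
  have d3: "((\<lambda>p. \<beta> * snd p) has_derivative (\<lambda>v. \<beta> * snd v)) (at x)"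
    by (intro has_derivative_mult_right has_derivative_snd has_derivative_ident)
  show "((\<lambda>p. (\<alpha> * fst p + f (snd p), \<beta> * snd p)) has_derivative
      (\<lambda>v. (\<alpha> * fst v + f' x * snd v, \<beta> * snd v))) (at x)"
    by (intro has_derivative_Pair has_derivative_add d1 d2 d3)
  show "\<forall>v. (\<lambda>v. (\<alpha> * fst v + f' x * snd v, \<beta> * snd v)) (cmul2 \<i> v) =
      cmul2 \<i> ((\<lambda>v. (\<alpha> * fst v + f' x * snd v, \<beta> * snd v)) v)"
    by (simp add: cmul2_def algebra_simps)
qed

context L begin

definition gt :: "linf \<Rightarrow> complex \<Rightarrow> nat \<Rightarrow> complex" where "gt u z n = c u n * z ^ (s n + 1)"
definition gd :: "linf \<Rightarrow> complex \<Rightarrow> nat \<Rightarrow> complex" where "gd u z n = c u n * of_nat (s n + 1) * z ^ s n"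
definition gg :: "linf \<Rightarrow> complex \<Rightarrow> complex" where "gg u z = suminf (gt u z)"
definition gg' :: "linf \<Rightarrow> complex \<Rightarrow> complex" where "gg' u z = suminf (gd u z)"

lemma gt_deriv: "((\<lambda>z. gt u z n) has_field_derivative gd u z n) (at z)"
proof -
  have "((\<lambda>z. z ^ (s n + 1)) has_field_derivative of_nat (s n + 1) * (1 * z ^ (s n + 1 - Suc 0))) (at z)"
    by (rule DERIV_power[OF DERIV_ident])
  then have "((\<lambda>z. z ^ (s n + 1)) has_field_derivative of_nat (s n + 1) * z ^ s n) (at z)"
    by simp
  then have "((\<lambda>z. c u n * z ^ (s n + 1)) has_field_derivative c u n * (of_nat (s n + 1) * z ^ s n)) (at z)"
    by (rule DERIV_cmult)
  then show ?thesis unfolding gt_def gd_def by (simp add: mult.assoc)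
qed

lemma gg_props: "\<forall>z\<in>ball 0 1. (gt u z sums gg u z) \<and> (gd u z sums gg' u z) \<and>
   (gg u has_field_derivative gg' u z) (at z)"
proof -
  have "\<exists>g g'. \<forall>x \<in> ball 0 1. ((\<lambda>n. gt u x n) sums g x) \<and> ((\<lambda>n. gd u x n) sums g' x) \<and>
      (g has_field_derivative g' x) (at x)"
  proof (rule series_and_derivative_comparison_local)
    show "open (ball (0::complex) 1)" by simp
    show "\<And>n x. x \<in> ball 0 1 \<Longrightarrow> ((\<lambda>z. gt u z n) has_field_derivative gd u x n) (at x)"
      by (rule gt_deriv)
    fix x :: complex assume x: "x \<in> ball 0 1"
    define \<rho> where "\<rho> = (1 + cmod x) / 2"
    have \<rho>: "0 \<le> \<rho>" "\<rho> < 1" using x by (auto simp: \<rho>_def)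
    show "\<exists>d h. 0 < d \<and> summable h \<and> (\<forall>\<^sub>F n in sequentially. \<forall>y\<in>ball x d \<inter> ball 0 1. norm (gt u y n) \<le> h n)"
    proof (intro exI conjI)
      show "0 < (1 - cmod x) / 2" using x by simp
      show "summable (\<lambda>n. norm u * \<rho> ^ n)" using \<rho> by (intro summable_mult summable_geometric) auto
      show "\<forall>\<^sub>F n in sequentially. \<forall>y\<in>ball x ((1 - cmod x) / 2) \<inter> ball 0 1. norm (gt u y n) \<le> norm u * \<rho> ^ n"
      proof (intro always_eventually allI ballI)
        fix n y assume "y \<in> ball x ((1 - cmod x) / 2) \<inter> ball 0 1"
        then have "cmod (x - y) < (1 - cmod x) / 2" by (simp add: dist_norm)
        moreover have "cmod y \<le> cmod x + cmod (x - y)" using norm_triangle_ineq[of x "y - x"]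
          by (simp add: norm_minus_commute)
        ultimately have "cmod y < cmod x + (1 - cmod x) / 2" by linarith
        then have y: "cmod y \<le> \<rho>" unfolding \<rho>_def by (simp add: field_simps)
        have "norm (gt u y n) = cmod (c u n) * cmod y ^ (s n + 1)" by (simp add: gt_def norm_mult norm_power)
        also have "\<dots> \<le> norm u * \<rho> ^ (s n + 1)" using y by (intro mult_mono norm_c power_mono) auto
        also have "\<dots> \<le> norm u * \<rho> ^ n"
          using \<rho> s_ge_n[of n] by (intro mult_left_mono power_decreasing) auto
        finally show "norm (gt u y n) \<le> norm u * \<rho> ^ n" .
      qed
    qed
  qed
  then obtain g g' where gg: "\<forall>x\<in>ball 0 1. (gt u x sums g x) \<and> (gd u x sums g' x) \<and> (g has_field_derivative g' x) (at x)"
    by auto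
  have e1: "\<And>x. x \<in> ball 0 1 \<Longrightarrow> gg u x = g x" unfolding gg_def using gg by (auto simp: sums_iff)
  have e2: "\<And>x. x \<in> ball 0 1 \<Longrightarrow> gg' u x = g' x" unfolding gg'_def using gg by (auto simp: sums_iff)
  show ?thesis
  proof
    fix z :: complex assume z: "z \<in> ball 0 1"
    have "(gg u has_field_derivative g' z) (at z)"
    proof (rule has_field_derivative_transform_within_open[of g _ _ "ball 0 1"])
      show "(g has_field_derivative g' z) (at z)" using gg z by blast
    qed (use z e1 in auto)
    then show "(gt u z sums gg u z) \<and> (gd u z sums gg' u z) \<and> (gg u has_field_derivative gg' u z) (at z)"
      using gg z e1 e2 by auto
  qed
qed

lemma gt_sums: "cmod z < 1 \<Longrightarrow> gt u z sums gg u z" using gg_props by auto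
lemma gg_deriv: "cmod z < 1 \<Longrightarrow> (gg u has_field_derivative gg' u z) (at z)" using gg_props by auto

lemma lam_exp: "exp (2 * pi * \<i> * of_nat m * complex_of_real th) = lam ^ m"
proof -
  have "lam ^ m = exp (of_nat m * (2 * pi * \<i> * complex_of_real th))"
    unfolding lam_def by (simp only: exp_of_nat_mult)
  then show ?thesis by (simp add: ac_simps)
qed

lemma phi_term_eq: "phi_term th s u z n * z = Gt u 1 z n"
  unfolding phi_term_def Gt_def c_def lam_exp by (simp add: algebra_simps)

lemma phi_summable: "summable (phi_term th s u z)"
proof (cases "z = 0")
  case True
  then have "phi_term th s u z = (\<lambda>n. 0)" using s_ge1 by (auto simp: phi_term_def fun_eq_iff)
  then show ?thesis by simp
next
  case False
  then have "phi_term th s u z = (\<lambda>n. Gt u 1 z n / z)"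
    using phi_term_eq by (auto simp: fun_eq_iff field_simps)
  then show ?thesis by (simp add: summable_divide Gt_summable)
qed

lemma phi_eq: "phi th s u z = lam * G u 1 z"
proof (cases "z = 0")
  case True
  have "Gt u 1 z = (\<lambda>n. 0)" using True by (auto simp: Gt_def fun_eq_iff)
  then have "G u 1 z = 0" by (simp add: G_def)
  then show ?thesis using True by (simp add: phi_def)
next
  case False
  have "(\<lambda>n. phi_term th s u z n * z) sums (suminf (phi_term th s u z) * z)"
    by (intro sums_mult2 summable_sums phi_summable)
  then have "G u 1 z = suminf (phi_term th s u z) * z"
    using G_sums[of u 1 z] unfolding phi_term_eq by (simp add: sums_iff)
  then show ?thesis unfolding phi_def lam_def[symmetric] by (simp add: ac_simps)
qed

lemma A_eq: "A_map th s u p = (lam * fst p + lam * G u 1 (snd p), lam * snd p)"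
  unfolding A_map_def phi_eq lam_def by simp

lemma G0: "G u 0 z = 0"
  unfolding G_def Gt_def by simp

lemma Gt_step: "Gt u 1 (lam ^ N * z) n = lam ^ N * (Gt u (Suc N) z n - Gt u N z n)"
proof -
  have e1: "(lam ^ N * z) ^ (s n + 1) = lam ^ N * lam ^ (N * s n) * z ^ (s n + 1)"
    by (simp add: power_mult_distrib power_mult[symmetric] power_add mult.commute)
  have e2: "lam ^ (Suc N * s n) = lam ^ (N * s n) * lam ^ s n" by (simp add: power_add)
  show ?thesis unfolding Gt_def e1 e2 by (simp add: algebra_simps)
qed

lemma G_step: "G u 1 (lam ^ N * z) = lam ^ N * (G u (Suc N) z - G u N z)"
proof -
  have "(\<lambda>n. lam ^ N * (Gt u (Suc N) z n - Gt u N z n)) sums (lam ^ N * (G u (Suc N) z - G u N z))"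
    by (intro sums_mult sums_diff G_sums)
  then show ?thesis using G_sums[of u 1 "lam ^ N * z"] unfolding Gt_step by (simp add: sums_iff)
qed

lemma orbit: "(A_map th s u ^^ N) p = (lam ^ N * fst p + lam ^ N * G u N (snd p), lam ^ N * snd p)"
proof (induction N)
  case 0 then show ?case by (simp add: G0)
next
  case (Suc N)
  have "(A_map th s u ^^ Suc N) p = A_map th s u ((A_map th s u ^^ N) p)" by simp
  also have "\<dots> = (lam * fst ((A_map th s u ^^ N) p) + lam * G u 1 (snd ((A_map th s u ^^ N) p)),
      lam * snd ((A_map th s u ^^ N) p))" by (rule A_eq)
  also have "\<dots> = (lam * (lam ^ N * fst p + lam ^ N * G u N (snd p)) + lam * (lam ^ N * (G u (Suc N) (snd p) - G u N (snd p))),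
      lam * (lam ^ N * snd p))" by (simp only: Suc.IH fst_conv snd_conv G_step)
  also have "\<dots> = (lam ^ Suc N * fst p + lam ^ Suc N * G u (Suc N) (snd p), lam ^ Suc N * snd p)"
    by (simp add: algebra_simps)
  finally show ?case .
qed

lemma conj_eq: "cmod z < 1 \<Longrightarrow> lam * G u 1 z + gg u (lam * z) = lam * gg u z"
proof -
  assume z: "cmod z < 1"
  have lz: "cmod (lam * z) < 1" using z by (simp add: norm_mult)
  have "(\<lambda>n. lam * gt u z n - gt u (lam * z) n) sums (lam * gg u z - gg u (lam * z))"
    by (intro sums_diff sums_mult gt_sums z lz)
  moreover have "(\<lambda>n. lam * gt u z n - gt u (lam * z) n) = (\<lambda>n. lam * Gt u 1 z n)"
    by (simp add: fun_eq_iff gt_def Gt_def power_mult_distrib algebra_simps)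
  ultimately have "(\<lambda>n. lam * Gt u 1 z n) sums (lam * gg u z - gg u (lam * z))" by simp
  moreover have "(\<lambda>n. lam * Gt u 1 z n) sums (lam * G u 1 z)" by (intro sums_mult G_sums)
  ultimately show ?thesis by (metis sums_unique2 diff_eq_eq add.commute)
qed

end



context L begin

definition Binv :: "linf \<Rightarrow> complex \<times> complex \<Rightarrow> complex \<times> complex" where
  "Binv u p = (inverse lam * fst p + (- G u 1 (inverse lam * snd p)), inverse lam * snd p)"

lemma A_B: "A_map th s u (Binv u p) = p"
  unfolding A_eq Binv_def by (simp add: algebra_simps)

lemma lam_inv_cancel: "lam * (inverse lam * x) = x"
  by (simp add: mult.assoc[symmetric])

lemma B_A: "Binv u (A_map th s u p) = p"
  unfolding A_eq Binv_def by (simp add: algebra_simps lam_inv_cancel)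

lemma A_form: "A_map th s u = (\<lambda>p. (lam * fst p + (\<lambda>z. lam * G u 1 z) (snd p), lam * snd p))"
  by (simp add: fun_eq_iff A_eq)

lemma B_form: "Binv u = (\<lambda>p. (inverse lam * fst p + (\<lambda>z. - G u 1 (inverse lam * z)) (snd p), inverse lam * snd p))"
  by (simp add: fun_eq_iff Binv_def)

lemma holo_A: "holo2_on (A_map th s u) UNIV"
  unfolding A_form
  by (rule holo2_form[where f' = "\<lambda>x. lam * G' u 1 (snd x)"]) (auto intro: DERIV_cmult G_deriv)

lemma holo_B: "holo2_on (Binv u) UNIV"
  unfolding B_form
proof (rule holo2_form[where f' = "\<lambda>x. - (G' u 1 (inverse lam * snd x) * inverse lam)"])
  fix x :: "complex \<times> complex"
  have "((\<lambda>z. G u 1 (inverse lam * z)) has_field_derivative G' u 1 (inverse lam * snd x) * inverse lam) (at (snd x))"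
    by (rule DERIV_chain2[OF G_deriv]) (rule DERIV_cmult_Id)
  then show "((\<lambda>z. - G u 1 (inverse lam * z)) has_field_derivative - (G' u 1 (inverse lam * snd x) * inverse lam)) (at (snd x))"
    by (rule DERIV_minus)
qed simp

lemma aut_A: "holo_aut_C2 (A_map th s u)"
  unfolding holo_aut_C2_def biholo2_on_def
  using holo_A holo_B A_B B_A by blast

lemma image_A: "A_map th s u ` (UNIV \<times> unit_disc) = UNIV \<times> unit_disc"
proof
  show "A_map th s u ` (UNIV \<times> unit_disc) \<subseteq> UNIV \<times> unit_disc"
    by (auto simp: A_eq unit_disc_def norm_mult)
  show "UNIV \<times> unit_disc \<subseteq> A_map th s u ` (UNIV \<times> unit_disc)"
  proof
    fix p :: "complex \<times> complex" assume p: "p \<in> UNIV \<times> unit_disc"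
    have b: "Binv u p \<in> UNIV \<times> unit_disc" using p
      by (auto simp: Binv_def unit_disc_def norm_mult norm_inverse)
    have e: "p = A_map th s u (Binv u p)" by (simp add: A_B)
    show "p \<in> A_map th s u ` (UNIV \<times> unit_disc)" by (rule image_eqI[where f = "A_map th s u" and x = "Binv u p", OF e b])
  qed
qed

definition Psi :: "linf \<Rightarrow> complex \<times> complex \<Rightarrow> complex \<times> complex" where
  "Psi u p = (fst p + gg u (snd p), snd p)"
definition Psii :: "linf \<Rightarrow> complex \<times> complex \<Rightarrow> complex \<times> complex" where
  "Psii u p = (fst p - gg u (snd p), snd p)"

lemma Psi_form: "Psi u = (\<lambda>p. (1 * fst p + (\<lambda>z. gg u z) (snd p), 1 * snd p))"
  by (simp add: fun_eq_iff Psi_def)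
lemma Psii_form: "Psii u = (\<lambda>p. (1 * fst p + (\<lambda>z. - gg u z) (snd p), 1 * snd p))"
  by (simp add: fun_eq_iff Psii_def)

lemma open_U: "open (UNIV \<times> unit_disc)"
  unfolding unit_disc_def by (intro open_Times) auto

lemma biholo_Psi: "biholo2_on (Psi u) (UNIV \<times> unit_disc)"
  unfolding biholo2_on_def
proof (intro conjI exI)
  show "holo2_on (Psi u) (UNIV \<times> unit_disc)"
    unfolding Psi_form
    by (rule holo2_form[OF open_U, where f' = "\<lambda>x. gg' u (snd x)"])
       (auto simp: unit_disc_def intro: gg_deriv)
  show "holo2_on (Psii u) (UNIV \<times> unit_disc)"
    unfolding Psii_form
    by (rule holo2_form[OF open_U, where f' = "\<lambda>x. - gg' u (snd x)"])
       (auto simp: unit_disc_def intro!: DERIV_minus gg_deriv)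
  show "Psi u ` (UNIV \<times> unit_disc) \<subseteq> UNIV \<times> unit_disc" by (auto simp: Psi_def)
  show "Psii u ` (UNIV \<times> unit_disc) \<subseteq> UNIV \<times> unit_disc" by (auto simp: Psii_def)
  show "\<forall>x\<in>UNIV \<times> unit_disc. Psii u (Psi u x) = x" by (auto simp: Psi_def Psii_def)
  show "\<forall>x\<in>UNIV \<times> unit_disc. Psi u (Psii u x) = x" by (auto simp: Psi_def Psii_def)
qed

lemma conj_Psi: "p \<in> UNIV \<times> unit_disc \<Longrightarrow> Psi u (A_map th s u p) = rot2 th (Psi u p)"
proof -
  assume p: "p \<in> UNIV \<times> unit_disc"
  then have z: "cmod (snd p) < 1" by (auto simp: unit_disc_def)
  have "Psi u (A_map th s u p) = (lam * fst p + (lam * G u 1 (snd p) + gg u (lam * snd p)), lam * snd p)"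
    by (simp add: Psi_def A_eq add.assoc)
  also have "\<dots> = (lam * (fst p + gg u (snd p)), lam * snd p)"
    using conj_eq[OF z, of u] by (simp add: distrib_left)
  also have "\<dots> = rot2 th (Psi u p)" by (simp add: rot2_def Psi_def lam_def)
  finally show ?thesis .
qed

end



context L begin

lemma d_lim: "d \<longlonglongrightarrow> 0"
proof (rule Lim_null_comparison[OF _ LIMSEQ_inverse_real_of_nat])
  show "\<forall>\<^sub>F n in sequentially. norm (d n) \<le> inverse (real (Suc n))"
  proof (intro always_eventually allI)
    fix n
    have "Suc n < 2 ^ Suc n" by (rule less_exp)
    also have "\<dots> \<le> 2 ^ ((n+3) * s n)"
    proof (rule power_increasing)
      have h: "n + 3 \<le> (n+3) * s n" using s_ge1[of n] by simp
      then show "Suc n \<le> (n+3) * s n" by linarith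
    qed simp
    also have "\<dots> \<le> T n" by (rule T_big)
    finally have "real (Suc n) \<le> real (T n)" by simp
    then have "1 / real (T n) \<le> 1 / real (Suc n)" by (intro divide_left_mono) auto
    then show "norm (d n) \<le> inverse (real (Suc n))" using d_up[of n] by (simp add: divide_inverse)
  qed
qed

lemma lam_s_lim: "(\<lambda>j. lam ^ s j) \<longlonglongrightarrow> 1"
proof -
  have "(\<lambda>j. exp (\<i> * complex_of_real (2 * pi * real 1 * d j))) \<longlonglongrightarrow> exp (\<i> * complex_of_real (2 * pi * real 1 * 0))"
    by (intro tendsto_intros d_lim)
  moreover have "\<And>j. lam ^ s j = exp (\<i> * complex_of_real (2 * pi * real 1 * d j))"
    using lam_pow[of 1] by simp
  ultimately show ?thesis by simp
qed

lemma pow_ss_bound: "cmod (1 - lam ^ (s j * s k)) \<le> 2 * pi * real (s k) / real (T k)"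
proof (cases "k < j")
  case True
  have "cmod (1 - lam ^ (s j * s k)) = cmod (1 - lam ^ (s k * s j))" by (simp add: mult.commute)
  also have "\<dots> \<le> 2 * pi * real (s k) / real (T j)" by (rule lam_pow_bound')
  also have "\<dots> \<le> 2 * pi * real (s k) / real (T k)"
    using T_mono[of k j] True T_pos[of k] by (intro divide_left_mono) auto
  finally show ?thesis .
next
  case False
  have "cmod (1 - lam ^ (s j * s k)) \<le> 2 * pi * real (s j) / real (T k)" by (rule lam_pow_bound')
  also have "\<dots> \<le> 2 * pi * real (s k) / real (T k)"
    using s_mono[of j k] False T_pos[of k] by (intro divide_right_mono) auto
  finally show ?thesis .
qed

lemma G_ss_lim: "(\<lambda>j. G u (s j) z) \<longlonglongrightarrow> 0"
proof -
  define R where "R = max 1 (cmod z)"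
  have R: "1 \<le> R" "cmod z \<le> R" by (auto simp: R_def)
  have t: "eventually (\<lambda>n. summable (\<lambda>k. norm (Gt u (s n) z k))) sequentially \<and>
           summable (\<lambda>n. norm ((\<lambda>k. 0::complex) n)) \<and>
           ((\<lambda>n. suminf (\<lambda>k. Gt u (s n) z k)) \<longlongrightarrow> suminf (\<lambda>k. 0::complex)) sequentially"
  proof (rule tannerys_theorem[where M = "\<lambda>k. norm u * (2 * pi) * H R k"])
    fix k
    show "(\<lambda>n. Gt u (s n) z k) \<longlonglongrightarrow> 0"
    proof (rule Lim_null_comparison)
      show "\<forall>\<^sub>F n in sequentially. norm (Gt u (s n) z k) \<le> norm u * R ^ (s k + 1) * (2 * pi * real (s k) * \<bar>d n\<bar>)"
      proof (intro always_eventually allI)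
        fix n
        have "norm (Gt u (s n) z k) = cmod (c u k) * cmod z ^ (s k + 1) * cmod (1 - lam ^ (s k * s n))"
          unfolding Gt_def by (simp add: norm_mult norm_power mult.commute)
        also have "\<dots> \<le> norm u * R ^ (s k + 1) * (2 * pi * real (s k) * \<bar>d n\<bar>)"
          using R by (intro mult_mono norm_c power_mono lam_pow_bound) auto
        finally show "norm (Gt u (s n) z k) \<le> norm u * R ^ (s k + 1) * (2 * pi * real (s k) * \<bar>d n\<bar>)" .
      qed
      show "(\<lambda>n. norm u * R ^ (s k + 1) * (2 * pi * real (s k) * \<bar>d n\<bar>)) \<longlonglongrightarrow> 0"
        using tendsto_mult[OF tendsto_const tendsto_mult[OF tendsto_const tendsto_rabs[OF d_lim]],
            of "norm u * R ^ (s k + 1)" "2 * pi * real (s k)"] by simp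
    qed
  next
    show "\<forall>\<^sub>F (k, n) in at_top \<times>\<^sub>F sequentially. norm (Gt u (s n) z k) \<le> norm u * (2 * pi) * H R k"
    proof (intro always_eventually allI, clarify)
      fix k n
      have "norm (Gt u (s n) z k) = cmod (c u k) * cmod z ^ (s k + 1) * cmod (1 - lam ^ (s n * s k))"
        unfolding Gt_def by (simp add: norm_mult norm_power)
      also have "\<dots> \<le> norm u * R ^ (s k + 1) * (2 * pi * real (s k) / real (T k))"
        using R by (intro mult_mono norm_c power_mono pow_ss_bound) auto
      also have "\<dots> = norm u * (2 * pi) * (R ^ (s k + 1) * real (s k) / real (T k))" by simp
      also have "\<dots> \<le> norm u * (2 * pi) * H R k"
      proof (intro mult_left_mono)
        have "R ^ (s k + 1) * real (s k) \<le> real (s k + 1) * R ^ (s k + 1) * real (s k)"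
          using R by (intro mult_right_mono) auto
        then show "R ^ (s k + 1) * real (s k) / real (T k) \<le> H R k"
          unfolding H_def using T_pos[of k] by (intro divide_right_mono) auto
      qed auto
      finally show "norm (Gt u (s n) z k) \<le> norm u * (2 * pi) * H R k" .
    qed
  next
    show "summable (\<lambda>k. norm u * (2 * pi) * H R k)" by (intro summable_mult summable_H R)
  qed simp
  then show ?thesis by (simp add: G_def)
qed

lemma orbit_ss_lim: "(\<lambda>j. (A_map th s u ^^ s j) p) \<longlonglongrightarrow> p"
proof -
  have "(\<lambda>j. (lam ^ s j * fst p + lam ^ s j * G u (s j) (snd p), lam ^ s j * snd p)) \<longlonglongrightarrow>
      (1 * fst p + 1 * 0, 1 * snd p)"
    by (intro tendsto_intros lam_s_lim G_ss_lim)
  then show ?thesis by (simp add: orbit)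
qed

lemma recur: "\<epsilon> > 0 \<Longrightarrow> \<exists>\<^sub>F N in sequentially. norm ((A_map th s u ^^ N) p - p) < \<epsilon>"
proof -
  assume e: "\<epsilon> > 0"
  have "(\<lambda>j. (A_map th s u ^^ s j) p - p) \<longlonglongrightarrow> 0"
    using tendsto_diff[OF orbit_ss_lim[of u p] tendsto_const[of p]] by simp
  then have "\<forall>\<^sub>F j in sequentially. norm ((A_map th s u ^^ s j) p - p) < \<epsilon>"
    using e by (simp add: tendsto_iff dist_norm)
  then obtain J where J: "\<And>j. j \<ge> J \<Longrightarrow> norm ((A_map th s u ^^ s j) p - p) < \<epsilon>"
    unfolding eventually_sequentially by blast
  show ?thesis unfolding frequently_sequentially
  proof
    fix M
    have "M \<le> s (max J M)" using s_ge_n[of "max J M"] by simp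
    moreover have "norm ((A_map th s u ^^ s (max J M)) p - p) < \<epsilon>" by (rule J) simp
    ultimately show "\<exists>n\<ge>M. norm ((A_map th s u ^^ n) p - p) < \<epsilon>" by blast
  qed
qed

end



lemma form_deriv:
  assumes f: "(f has_field_derivative f') (at (snd x))"
  shows "((\<lambda>p. (\<alpha> * fst p + f (snd p), \<beta> * snd p)) has_derivative
      (\<lambda>v. (\<alpha> * fst v + f' * snd v, \<beta> * snd v))) (at x)"
proof -
  have d1: "((\<lambda>p. \<alpha> * fst p) has_derivative (\<lambda>v. \<alpha> * fst v)) (at x)"
    by (intro has_derivative_mult_right has_derivative_fst has_derivative_ident)
  have fd: "(f has_derivative (\<lambda>h. f' * h)) (at (snd x))"
    using f by (simp add: has_field_derivative_def)
  have d2: "((\<lambda>p. f (snd p)) has_derivative (\<lambda>v. f' * snd v)) (at x)"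
    using has_derivative_compose[OF has_derivative_snd[OF has_derivative_ident] fd] by simp
  have d3: "((\<lambda>p. \<beta> * snd p) has_derivative (\<lambda>v. \<beta> * snd v)) (at x)"
    by (intro has_derivative_mult_right has_derivative_snd has_derivative_ident)
  show ?thesis by (intro has_derivative_Pair has_derivative_add d1 d2 d3)
qed

context L begin

definition tt :: "nat \<Rightarrow> nat" where "tt j = nat \<lceil>1 / (4 * \<bar>d j\<bar> * real (s j))\<rceil>"
definition Nn :: "nat \<Rightarrow> nat" where "Nn j = tt j * s j"

lemma d_pos: "0 < \<bar>d j\<bar>"
proof -
  have "0 < 1 / (2 * real (T j))" using T_pos[of j] by simp
  then show ?thesis using d_low[of j] by linarith
qed

lemma tt_bounds:
  "1 / (4 * \<bar>d j\<bar> * real (s j)) \<le> real (tt j)" "real (tt j) \<le> 1 / (4 * \<bar>d j\<bar> * real (s j)) + 1"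
proof -
  define y where "y = 1 / (4 * \<bar>d j\<bar> * real (s j))"
  have y0: "0 < y" unfolding y_def using d_pos[of j] s_ge1[of j] by simp
  have e: "real (tt j) = of_int \<lceil>y\<rceil>" unfolding tt_def y_def[symmetric] using y0 by simp
  have c: "of_int \<lceil>y\<rceil> - 1 < y \<and> y \<le> of_int \<lceil>y\<rceil>" by (rule ceiling_correct)
  show "1 / (4 * \<bar>d j\<bar> * real (s j)) \<le> real (tt j)" unfolding y_def[symmetric] e using c by linarith
  show "real (tt j) \<le> 1 / (4 * \<bar>d j\<bar> * real (s j)) + 1" unfolding y_def[symmetric] e using c by linarith
qed

lemma y_mult: "1 / (4 * \<bar>d j\<bar> * real (s j)) * \<bar>d j\<bar> = 1 / (4 * real (s j))"
  using d_pos[of j] s_ge1[of j] by (simp add: field_simps)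

lemma sd_le: "real (s j) * \<bar>d j\<bar> \<le> 1 / 4"
proof -
  have "real (s j) * \<bar>d j\<bar> \<le> real (s j) * (1 / real (T j))" by (intro mult_left_mono d_up) auto
  also have "\<dots> \<le> 1 / 4"
  proof -
    have "real (4 * s j) \<le> real (T j)" using s4_le_T[of j] by (simp only: of_nat_le_iff)
    then have "4 * real (s j) \<le> real (T j)" by simp
    then show ?thesis using T_pos[of j] by (simp add: field_simps)
  qed
  finally show ?thesis .
qed

lemma x_bounds: "1 / 4 \<le> real (tt j) * real (s j) * \<bar>d j\<bar>" "real (tt j) * real (s j) * \<bar>d j\<bar> \<le> 1 / 2"
proof -
  have sp: "0 < real (s j)" using s_ge1[of j] by simp
  have "1 / 4 = 1 / (4 * \<bar>d j\<bar> * real (s j)) * real (s j) * \<bar>d j\<bar>"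
    using d_pos[of j] sp by (simp add: field_simps)
  also have "\<dots> \<le> real (tt j) * real (s j) * \<bar>d j\<bar>"
    using tt_bounds(1)[of j] sp d_pos[of j] by (intro mult_right_mono) auto
  finally show "1 / 4 \<le> real (tt j) * real (s j) * \<bar>d j\<bar>" .
  have "real (tt j) * real (s j) * \<bar>d j\<bar> \<le> (1 / (4 * \<bar>d j\<bar> * real (s j)) + 1) * real (s j) * \<bar>d j\<bar>"
    using tt_bounds(2)[of j] sp d_pos[of j] by (intro mult_right_mono) auto
  also have "\<dots> = 1 / 4 + real (s j) * \<bar>d j\<bar>"
    using d_pos[of j] sp by (simp add: field_simps)
  also have "\<dots> \<le> 1 / 2" using sd_le[of j] by simp
  finally show "real (tt j) * real (s j) * \<bar>d j\<bar> \<le> 1 / 2" .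
qed

lemma main_factor: "1 \<le> cmod (1 - lam ^ (Nn j * s j))"
proof -
  define y where "y = 2 * pi * real (tt j * s j) * d j"
  have "lam ^ (Nn j * s j) = exp (\<i> * complex_of_real y)"
    unfolding Nn_def y_def by (rule lam_pow)
  moreover have "cos y \<le> 0"
  proof -
    have ay: "\<bar>y\<bar> = 2 * pi * (real (tt j) * real (s j) * \<bar>d j\<bar>)"
      unfolding y_def by (simp add: abs_mult)
    have "2 * pi * (1/4) \<le> 2 * pi * (real (tt j) * real (s j) * \<bar>d j\<bar>)"
      using x_bounds(1)[of j] by (intro mult_left_mono) auto
    then have "pi / 2 \<le> \<bar>y\<bar>" unfolding ay by simp
    moreover have "2 * pi * (real (tt j) * real (s j) * \<bar>d j\<bar>) \<le> 2 * pi * (1/2)"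
      using x_bounds(2)[of j] by (intro mult_left_mono) auto
    then have "\<bar>y\<bar> \<le> pi" unfolding ay by simp
    ultimately have "cos \<bar>y\<bar> \<le> cos (pi / 2)" by (intro cos_monotone_0_pi_le) auto
    then show ?thesis by simp
  qed
  ultimately show ?thesis using norm_1_minus_exp_ge by simp
qed

lemma other_factor:
  assumes "n \<noteq> j"
  shows "cmod (1 - lam ^ (Nn j * s n)) \<le> 4 * pi * real (s n) / real (T n)"
proof (cases "n < j")
  case True
  have sp: "0 < real (s j)" using s_ge1[of j] by simp
  have Tn: "0 < real (T n)" using T_pos[of n] by simp
  have "cmod (1 - lam ^ (Nn j * s n)) = cmod (1 - lam ^ ((tt j * s n) * s j))"
    unfolding Nn_def by (simp add: ac_simps)
  also have "\<dots> \<le> 2 * pi * real (tt j * s n) * \<bar>d j\<bar>" by (rule lam_pow_bound)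
  also have "\<dots> = 2 * pi * real (s n) * (real (tt j) * \<bar>d j\<bar>)" by simp
  also have "\<dots> \<le> 2 * pi * real (s n) * ((1 / (4 * \<bar>d j\<bar> * real (s j)) + 1) * \<bar>d j\<bar>)"
    using tt_bounds(2)[of j] by (intro mult_left_mono mult_right_mono) auto
  also have "\<dots> = 2 * pi * real (s n) * (1 / (4 * real (s j)) + \<bar>d j\<bar>)"
    using y_mult[of j] by (simp add: distrib_right)
  also have "\<dots> \<le> 2 * pi * real (s n) * (1 / real (T n) + 1 / real (T n))"
  proof (intro mult_left_mono add_mono)
    have "real (T n) \<le> real (s j)" using T_le_s[OF True] by simp
    then have "real (T n) \<le> 4 * real (s j)" by simp
    then show "1 / (4 * real (s j)) \<le> 1 / real (T n)" using Tn by (intro divide_left_mono) auto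
    have "real (T n) \<le> real (T j)" using T_mono[of n j] True by simp
    then have "1 / real (T j) \<le> 1 / real (T n)" using Tn by (intro divide_left_mono) auto
    then show "\<bar>d j\<bar> \<le> 1 / real (T n)" using d_up[of j] by linarith
  qed auto
  also have "\<dots> = 4 * pi * real (s n) / real (T n)" by simp
  finally show ?thesis .
next
  case False
  then have jn: "j < n" using assms by simp
  have dp: "0 < \<bar>d j\<bar>" by (rule d_pos)
  have Tn: "0 < real (T n)" using T_pos[of n] by simp
  have "cmod (1 - lam ^ (Nn j * s n)) \<le> 2 * pi * real (Nn j) / real (T n)" by (rule lam_pow_bound')
  also have "real (Nn j) \<le> 2 * real (s n)"
  proof -
    have "real (Nn j) = real (tt j) * real (s j)" by (simp add: Nn_def)
    also have "\<dots> \<le> (1 / (4 * \<bar>d j\<bar> * real (s j)) + 1) * real (s j)"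
      using tt_bounds(2)[of j] by (intro mult_right_mono) auto
    also have "\<dots> = 1 / (4 * \<bar>d j\<bar>) + real (s j)"
      using s_ge1[of j] dp by (simp add: field_simps)
    also have "1 / (4 * \<bar>d j\<bar>) \<le> real (T j) / 2"
    proof -
      have "1 \<le> 2 * real (T j) * \<bar>d j\<bar>" using d_low[of j] T_pos[of j] by (simp add: field_simps)
      then show ?thesis using dp by (simp add: field_simps)
    qed
    also have "real (T j) / 2 + real (s j) \<le> 2 * real (s n)"
    proof -
      have "real (T j) \<le> real (s n)" using T_le_s[OF jn] by simp
      moreover have "real (s j) \<le> real (T j)" using s_le_T[of j] by simp
      ultimately show ?thesis by simp
    qed
    finally show ?thesis by simp
  qed
  then have "2 * pi * real (Nn j) / real (T n) \<le> 2 * pi * (2 * real (s n)) / real (T n)"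
    using Tn by (intro divide_right_mono mult_left_mono) auto
  finally show ?thesis by simp
qed

end



context L begin

lemma lower_bound:
  fixes a :: "nat \<Rightarrow> complex"
  assumes R1: "1 \<le> R" and ha: "\<And>n. cmod (a n) \<le> real (s n + 1) * R ^ (s n + 1)"
  shows "cmod (c u j) * cmod (a j) - 4 * pi * norm u * suminf (H R)
      \<le> cmod (suminf (\<lambda>n. c u n * a n * (1 - lam ^ (Nn j * s n))))"
proof -
  define F where "F = (\<lambda>n. c u n * a n * (1 - lam ^ (Nn j * s n)))"
  define F' where "F' = (\<lambda>n. if n = j then 0 else F n)"
  define M where "M = (\<lambda>n. 4 * pi * norm u * H R n)"
  have sM: "summable M" unfolding M_def by (intro summable_mult summable_H R1)
  have bF': "norm (F' n) \<le> M n" for n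
  proof (cases "n = j")
    case True then show ?thesis unfolding F'_def M_def using H_nonneg[of R n] R1 by simp
  next
    case False
    have "norm (F' n) = cmod (c u n) * cmod (a n) * cmod (1 - lam ^ (Nn j * s n))"
      using False by (simp add: F'_def F_def norm_mult)
    also have "\<dots> \<le> norm u * (real (s n + 1) * R ^ (s n + 1)) * (4 * pi * real (s n) / real (T n))"
      using R1 by (intro mult_mono norm_c ha other_factor[OF False]) auto
    also have "\<dots> = M n" unfolding M_def H_def by (simp add: algebra_simps add_divide_distrib)
    finally show ?thesis .
  qed
  have snF': "summable (\<lambda>n. norm (F' n))"
    by (rule summable_comparison_test[OF _ sM]) (use bF' in auto)
  have sF': "summable F'" using snF' by (rule summable_norm_cancel)
  have Fdec: "F = (\<lambda>n. (if n = j then F n else 0) + F' n)" by (auto simp: F'_def fun_eq_iff)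
  have "(\<lambda>n. (if n = j then F n else 0) + F' n) sums (F j + suminf F')"
    by (intro sums_add sums_single summable_sums sF')
  then have sumF: "suminf F = F j + suminf F'" using Fdec by (simp add: sums_iff)
  have "norm (suminf F') \<le> (\<Sum>n. norm (F' n))" by (rule summable_norm[OF snF'])
  also have "\<dots> \<le> suminf M" by (rule suminf_le[OF bF' snF' sM])
  also have "\<dots> = 4 * pi * norm u * suminf (H R)" unfolding M_def
    by (rule suminf_mult[OF summable_H[OF R1]])
  finally have nF': "norm (suminf F') \<le> 4 * pi * norm u * suminf (H R)" .
  have "cmod (c u j) * cmod (a j) * 1 \<le> cmod (c u j) * cmod (a j) * cmod (1 - lam ^ (Nn j * s j))"
    by (intro mult_left_mono main_factor) auto
  then have nFj: "cmod (c u j) * cmod (a j) \<le> norm (F j)" by (simp add: F_def norm_mult)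
  have "norm (F j) - norm (suminf F') \<le> norm (F j + suminf F')" by (rule norm_diff_ineq)
  then show ?thesis using nF' nFj unfolding F_def[symmetric] sumF by linarith
qed

lemma G_lower:
  assumes z: "1 \<le> cmod z"
  shows "cmod (c u j) * cmod z ^ s j - 4 * pi * norm u * suminf (H (cmod z)) \<le> cmod (G u (Nn j) z)"
proof -
  have ha: "cmod (z ^ (s n + 1)) \<le> real (s n + 1) * cmod z ^ (s n + 1)" for n
  proof -
    have "1 * cmod z ^ (s n + 1) \<le> real (s n + 1) * cmod z ^ (s n + 1)" by (intro mult_right_mono) auto
    then show ?thesis by (simp only: norm_power mult_1_left)
  qed
  have "cmod z ^ s j \<le> cmod z ^ (s j + 1)" using z by (intro power_increasing) auto
  also have "\<dots> = cmod (z ^ (s j + 1))" by (simp only: norm_power)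
  finally have "cmod (c u j) * cmod z ^ s j \<le> cmod (c u j) * cmod (z ^ (s j + 1))"
    by (intro mult_left_mono) auto
  moreover have "cmod (c u j) * cmod (z ^ (s j + 1)) - 4 * pi * norm u * suminf (H (cmod z))
      \<le> cmod (G u (Nn j) z)"
    unfolding G_def Gt_def by (rule lower_bound[OF z ha])
  ultimately show ?thesis by linarith
qed

lemma G'_lower:
  assumes z: "1 \<le> cmod z"
  shows "cmod (c u j) * cmod z ^ s j - 4 * pi * norm u * suminf (H (cmod z)) \<le> cmod (G' u (Nn j) z)"
proof -
  have ha: "cmod (of_nat (s n + 1) * z ^ s n) \<le> real (s n + 1) * cmod z ^ (s n + 1)" for n
  proof -
    have "real (s n + 1) * cmod z ^ s n \<le> real (s n + 1) * cmod z ^ (s n + 1)"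
      using z by (intro mult_left_mono power_increasing) auto
    then show ?thesis by (simp only: norm_mult norm_power norm_of_nat)
  qed
  have "cmod (c u j) * cmod z ^ s j \<le> cmod (c u j) * cmod (of_nat (s j + 1) * z ^ s j)"
  proof (intro mult_left_mono)
    have "1 * cmod z ^ s j \<le> real (s j + 1) * cmod z ^ s j" by (intro mult_right_mono) auto
    then show "cmod z ^ s j \<le> cmod (of_nat (s j + 1) * z ^ s j)" by (simp only: norm_mult norm_power norm_of_nat mult_1_left)
  qed auto
  moreover have b: "G' u (Nn j) z = suminf (\<lambda>n. c u n * (of_nat (s n + 1) * z ^ s n) * (1 - lam ^ (Nn j * s n)))"
    unfolding G'_def Gd_def by (simp add: mult.assoc)
  moreover have "cmod (c u j) * cmod (of_nat (s j + 1) * z ^ s j) - 4 * pi * norm u * suminf (H (cmod z))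
      \<le> cmod (suminf (\<lambda>n. c u n * (of_nat (s n + 1) * z ^ s n) * (1 - lam ^ (Nn j * s n))))"
    by (rule lower_bound[OF z ha])
  ultimately show ?thesis unfolding b by linarith
qed

lemma unb_aux:
  fixes f :: "nat \<Rightarrow> real"
  assumes R: "1 < R" and \<delta>: "0 < \<delta>" and fr: "\<exists>\<^sub>F j in sequentially. \<delta> \<le> cmod (c u j)"
    and f: "\<And>j. cmod (c u j) * R ^ s j - K \<le> f j"
  shows "\<exists>j. B < f j"
proof -
  obtain n0 where n0: "(B + K) / \<delta> < R ^ n0" using real_arch_pow[OF R] by blast
  obtain j where j: "j \<ge> n0" "\<delta> \<le> cmod (c u j)" using fr unfolding frequently_sequentially by blast
  have "R ^ n0 \<le> R ^ s j" using R j(1) s_ge_n[of j] by (intro power_increasing) auto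
  then have "(B + K) / \<delta> < R ^ s j" using n0 by linarith
  then have "B + K < R ^ s j * \<delta>" using \<delta> by (simp add: pos_divide_less_eq)
  also have "R ^ s j * \<delta> \<le> cmod (c u j) * R ^ s j"
    using j(2) R by (simp add: mult.commute mult_right_mono)
  finally have "B < cmod (c u j) * R ^ s j - K" by linarith
  then show ?thesis using f[of j] by (intro exI[of _ j]) linarith
qed

lemma unb_orbit:
  assumes \<delta>: "0 < \<delta>" and fr: "\<exists>\<^sub>F j in sequentially. \<delta> \<le> cmod (c u j)" and z: "1 < cmod (snd p)"
  shows "\<not> bounded (range (\<lambda>N. (A_map th s u ^^ N) p))"
proof
  assume "bounded (range (\<lambda>N. (A_map th s u ^^ N) p))"
  then obtain B where B: "\<And>N. norm ((A_map th s u ^^ N) p) \<le> B" unfolding bounded_iff by auto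
  define K where "K = 4 * pi * norm u * suminf (H (cmod (snd p))) + cmod (fst p)"
  have "\<exists>j. B < norm ((A_map th s u ^^ Nn j) p)"
  proof (rule unb_aux[OF z \<delta> fr])
    fix j
    have "cmod (lam ^ Nn j * fst p + lam ^ Nn j * G u (Nn j) (snd p))
        \<le> norm (lam ^ Nn j * fst p + lam ^ Nn j * G u (Nn j) (snd p), lam ^ Nn j * snd p)"
      by (rule norm_fst_le)
    also have "\<dots> = norm ((A_map th s u ^^ Nn j) p)" by (simp add: orbit)
    finally have a: "cmod (lam ^ Nn j * fst p + lam ^ Nn j * G u (Nn j) (snd p)) \<le> norm ((A_map th s u ^^ Nn j) p)" .
    have "cmod (lam ^ Nn j * fst p + lam ^ Nn j * G u (Nn j) (snd p)) = cmod (G u (Nn j) (snd p) + fst p)"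
      by (simp add: distrib_left[symmetric] norm_mult add.commute)
    moreover have "cmod (G u (Nn j) (snd p)) - cmod (fst p) \<le> cmod (G u (Nn j) (snd p) + fst p)"
      by (rule norm_diff_ineq)
    moreover have "cmod (c u j) * cmod (snd p) ^ s j - 4 * pi * norm u * suminf (H (cmod (snd p)))
        \<le> cmod (G u (Nn j) (snd p))" using z by (intro G_lower) auto
    ultimately show "cmod (c u j) * cmod (snd p) ^ s j - K \<le> norm ((A_map th s u ^^ Nn j) p)"
      using a unfolding K_def by linarith
  qed
  then show False using B by (meson not_le)
qed

lemma orbit_form: "(A_map th s u ^^ N) = (\<lambda>q. (lam ^ N * fst q + (\<lambda>z. lam ^ N * G u N z) (snd q), lam ^ N * snd q))"
  by (simp add: fun_eq_iff orbit)

lemma orbit_deriv: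
  "((A_map th s u ^^ N) has_derivative
     (\<lambda>v. (lam ^ N * fst v + lam ^ N * G' u N (snd p) * snd v, lam ^ N * snd v))) (at p)"
  unfolding orbit_form by (rule form_deriv) (intro DERIV_cmult G_deriv)

lemma onorm_ge: "cmod (G' u N (snd p)) \<le> onorm (frechet_derivative (A_map th s u ^^ N) (at p))"
proof -
  define D where "D = (\<lambda>v::complex \<times> complex. (lam ^ N * fst v + lam ^ N * G' u N (snd p) * snd v, lam ^ N * snd v))"
  have hd: "((A_map th s u ^^ N) has_derivative D) (at p)" unfolding D_def by (rule orbit_deriv)
  have fd: "frechet_derivative (A_map th s u ^^ N) (at p) = D" using frechet_derivative_at[OF hd] by simp
  have bl: "bounded_linear D" using hd by (rule has_derivative_bounded_linear)
  have "cmod (G' u N (snd p)) = cmod (lam ^ N * G' u N (snd p))" by (simp add: norm_mult)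
  also have "\<dots> \<le> norm (lam ^ N * G' u N (snd p), lam ^ N)" by (rule norm_fst_le)
  also have "\<dots> = norm (D (0, 1))" by (simp add: D_def)
  also have "\<dots> \<le> onorm D * norm ((0::complex, 1::complex))" by (rule onorm[OF bl])
  also have "norm ((0::complex, 1::complex)) = 1" by (simp add: norm_Pair)
  finally show ?thesis using fd by simp
qed

lemma unb_deriv:
  assumes \<delta>: "0 < \<delta>" and fr: "\<exists>\<^sub>F j in sequentially. \<delta> \<le> cmod (c u j)" and z: "1 < cmod (snd p)"
  shows "\<not> bounded (range (\<lambda>N. onorm (frechet_derivative (A_map th s u ^^ N) (at p))))"
proof
  assume "bounded (range (\<lambda>N. onorm (frechet_derivative (A_map th s u ^^ N) (at p))))"
  then obtain B where B: "\<And>N. norm (onorm (frechet_derivative (A_map th s u ^^ N) (at p))) \<le> B"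
    unfolding bounded_iff by auto
  define K where "K = 4 * pi * norm u * suminf (H (cmod (snd p)))"
  have "\<exists>j. B < onorm (frechet_derivative (A_map th s u ^^ Nn j) (at p))"
  proof (rule unb_aux[OF z \<delta> fr])
    fix j
    have "cmod (c u j) * cmod (snd p) ^ s j - K \<le> cmod (G' u (Nn j) (snd p))"
      unfolding K_def using z by (intro G'_lower) auto
    also have "\<dots> \<le> onorm (frechet_derivative (A_map th s u ^^ Nn j) (at p))" by (rule onorm_ge)
    finally show "cmod (c u j) * cmod (snd p) ^ s j - K \<le> onorm (frechet_derivative (A_map th s u ^^ Nn j) (at p))" .
  qed
  then obtain j where "B < onorm (frechet_derivative (A_map th s u ^^ Nn j) (at p))" by blast
  moreover have "norm (onorm (frechet_derivative (A_map th s u ^^ Nn j) (at p))) \<le> B" by (rule B)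
  ultimately show False by simp
qed

definition E2 :: "linf set" where
  "E2 = {u. \<exists>\<delta>>0. \<exists>\<^sub>F j in sequentially. \<delta> \<le> cmod (apply_bcontfun u (s j))}"

lemma E2_open: "open E2"
  unfolding open_contains_ball
proof
  fix u assume "u \<in> E2"
  then obtain \<delta> where \<delta>: "\<delta> > 0" and fr: "\<exists>\<^sub>F j in sequentially. \<delta> \<le> cmod (apply_bcontfun u (s j))"
    unfolding E2_def by auto
  show "\<exists>\<epsilon>>0. ball u \<epsilon> \<subseteq> E2"
  proof (intro exI conjI)
    show "0 < \<delta> / 2" using \<delta> by simp
    show "ball u (\<delta> / 2) \<subseteq> E2"
    proof
      fix v assume "v \<in> ball u (\<delta> / 2)"
      then have dv: "dist u v < \<delta> / 2" by simp
      have "\<exists>\<^sub>F j in sequentially. \<delta> / 2 \<le> cmod (apply_bcontfun v (s j))"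
        using fr
      proof (rule frequently_elim1)
        fix j assume a: "\<delta> \<le> cmod (apply_bcontfun u (s j))"
        have "dist (apply_bcontfun u (s j)) (apply_bcontfun v (s j)) \<le> dist u v" by (rule dist_bounded)
        moreover have "cmod (apply_bcontfun u (s j)) \<le> cmod (apply_bcontfun v (s j)) + dist (apply_bcontfun u (s j)) (apply_bcontfun v (s j))"
          unfolding dist_norm using norm_triangle_ineq[of "apply_bcontfun v (s j)" "apply_bcontfun u (s j) - apply_bcontfun v (s j)"]
          by simp
        ultimately show "\<delta> / 2 \<le> cmod (apply_bcontfun v (s j))" using a dv by linarith
      qed
      then show "v \<in> E2" unfolding E2_def using \<delta> by (intro CollectI exI[of _ "\<delta> / 2"]) auto
    qed
  qed
qed

lemma E2_dense: "closure E2 = UNIV"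
proof -
  have "u \<in> closure E2" for u
    unfolding closure_approachable
  proof (intro allI impI)
    fix \<epsilon> :: real assume e: "\<epsilon> > 0"
    define f where "f = (\<lambda>m. if cmod (apply_bcontfun u m) < \<epsilon> / 4 then complex_of_real (\<epsilon> / 4) else apply_bcontfun u m)"
    have "f \<in> bcontfun"
    proof (rule bcontfun_normI)
      show "continuous_on UNIV f" by simp
      fix x show "norm (f x) \<le> \<epsilon> / 4 + norm u"
        unfolding f_def using norm_bounded[of u x] e by auto
    qed
    then obtain v where v: "f = apply_bcontfun v" by (rule bcontfunE)
    have fb: "\<epsilon> / 4 \<le> cmod (f m)" for m unfolding f_def using e by auto
    have "v \<in> E2" unfolding E2_def
    proof (intro CollectI exI conjI)
      show "0 < \<epsilon> / 4" using e by simp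
      have "\<forall>j. \<epsilon> / 4 \<le> cmod (apply_bcontfun v (s j))" unfolding v[symmetric] using fb by blast
      then show "\<exists>\<^sub>F j in sequentially. \<epsilon> / 4 \<le> cmod (apply_bcontfun v (s j))"
        by (intro eventually_frequently always_eventually) auto
    qed
    moreover have "dist v u < \<epsilon>"
    proof -
      have "dist v u \<le> \<epsilon> / 2"
      proof (rule dist_bound)
        fix m
        show "dist (apply_bcontfun v m) (apply_bcontfun u m) \<le> \<epsilon> / 2"
        proof (cases "cmod (apply_bcontfun u m) < \<epsilon> / 4")
          case True
          have "dist (apply_bcontfun v m) (apply_bcontfun u m) = cmod (complex_of_real (\<epsilon> / 4) - apply_bcontfun u m)"
            using True by (simp add: v[symmetric] f_def dist_norm)
          also have "\<dots> \<le> cmod (complex_of_real (\<epsilon> / 4)) + cmod (apply_bcontfun u m)" by (rule norm_triangle_ineq4)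
          also have "\<dots> \<le> \<epsilon> / 2" using True e by simp
          finally show ?thesis .
        next
          case False
          then show ?thesis using e by (simp add: v[symmetric] f_def)
        qed
      qed
      then show ?thesis using e by simp
    qed
    ultimately show "\<exists>y\<in>E2. dist y u < \<epsilon>" by blast
  qed
  then show ?thesis by auto
qed

lemma main:
  "\<exists>E2 :: linf set. gdelta_in euclidean E2 \<and> closure E2 = UNIV \<and>
     (\<forall>u\<in>E2.
        (\<forall>z. summable (phi_term th s u z)) \<and>
        holo_aut_C2 (A_map th s u) \<and>
        A_map th s u ` (UNIV \<times> unit_disc) = UNIV \<times> unit_disc \<and>
        (\<exists>\<Psi>. biholo2_on \<Psi> (UNIV \<times> unit_disc) \<and>
           (\<forall>p\<in>UNIV \<times> unit_disc. \<Psi> (A_map th s u p) = rot2 th (\<Psi> p))) \<and>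
        (\<forall>p\<in>UNIV \<times> {z. norm z > 1}.
           \<not> bounded (range (\<lambda>N. (A_map th s u ^^ N) p)) \<and>
           (\<forall>\<epsilon>>0. \<exists>\<^sub>F N in sequentially. norm ((A_map th s u ^^ N) p - p) < \<epsilon>)) \<and>
        (\<forall>p\<in>UNIV \<times> {z. norm z > 1}. \<not> bounded (range (\<lambda>N.
           onorm (frechet_derivative (A_map th s u ^^ N) (at p))))))"
proof (intro exI[of _ E2] conjI ballI)
  show "gdelta_in euclidean E2" using E2_open by (intro open_imp_gdelta_in) simp
  show "closure E2 = UNIV" by (rule E2_dense)
  fix u assume u: "u \<in> E2"
  then obtain \<delta> where \<delta>: "\<delta> > 0" and fr: "\<exists>\<^sub>F j in sequentially. \<delta> \<le> cmod (c u j)"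
    unfolding E2_def c_def by auto
  show "\<forall>z. summable (phi_term th s u z)" by (intro allI phi_summable)
  show "holo_aut_C2 (A_map th s u)" by (rule aut_A)
  show "A_map th s u ` (UNIV \<times> unit_disc) = UNIV \<times> unit_disc" by (rule image_A)
  show "\<exists>\<Psi>. biholo2_on \<Psi> (UNIV \<times> unit_disc) \<and> (\<forall>p\<in>UNIV \<times> unit_disc. \<Psi> (A_map th s u p) = rot2 th (\<Psi> p))"
    using biholo_Psi conj_Psi by blast
  show "\<not> bounded (range (\<lambda>N. (A_map th s u ^^ N) p))" if "p \<in> UNIV \<times> {z. norm z > 1}" for p
    using unb_orbit[OF \<delta> fr] that by auto
  show "\<forall>\<epsilon>>0. \<exists>\<^sub>F N in sequentially. norm ((A_map th s u ^^ N) p - p) < \<epsilon>" for p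
    using recur by auto
  show "\<not> bounded (range (\<lambda>N. onorm (frechet_derivative (A_map th s u ^^ N) (at p))))"
    if "p \<in> UNIV \<times> {z. norm z > 1}" for p
    using unb_deriv[OF \<delta> fr] that by auto
qed

end



theorem theorem1:
  fixes \<theta> :: real and S :: "(complex \<times> complex) set"
  assumes irr: "\<theta> \<notin> \<rat>"
    and growth: "filterlim (\<lambda>n. ln (real (cf_q \<theta> (Suc n))) / real (cf_q \<theta> n)) at_top sequentially"
    and S_count: "countable S"
    and S_sub: "S \<subseteq> UNIV \<times> {z. norm z > 1}"
    and S_dense: "UNIV \<times> {z. norm z > 1} \<subseteq> closure S"
  shows "\<exists>(k :: nat \<Rightarrow> nat) (E2 :: linf set).
           strict_mono k \<and>
           (let q' = (\<lambda>n. cf_q \<theta> (k n)) in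
             gdelta_in euclidean E2 \<and> closure E2 = UNIV \<and>
             (\<forall>u\<in>E2.
                (\<forall>z. summable (phi_term \<theta> q' u z)) \<and>
                holo_aut_C2 (A_map \<theta> q' u) \<and>
                A_map \<theta> q' u ` (UNIV \<times> unit_disc) = UNIV \<times> unit_disc \<and>
                (\<exists>\<Psi>. biholo2_on \<Psi> (UNIV \<times> unit_disc) \<and>
                   (\<forall>p\<in>UNIV \<times> unit_disc. \<Psi> (A_map \<theta> q' u p) = rot2 \<theta> (\<Psi> p))) \<and>
                (\<forall>p\<in>UNIV \<times> {z. norm z > 1}.
                   \<not> bounded (range (\<lambda>N. (A_map \<theta> q' u ^^ N) p)) \<and>
                   (\<forall>\<epsilon>>0. \<exists>\<^sub>F N in sequentially. norm ((A_map \<theta> q' u ^^ N) p - p) < \<epsilon>)) \<and>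
                (\<forall>p\<in>S. \<not> bounded (range (\<lambda>N.
                   onorm (frechet_derivative (A_map \<theta> q' u ^^ N) (at p)))))))"
proof -
  obtain k where k: "strict_mono k" and kP: "\<forall>n. 1 \<le> cf_q \<theta> (k n) \<and> 2 ^ ((n+3) * cf_q \<theta> (k n)) \<le> cf_q \<theta> (Suc (k n))
     \<and> cf_q \<theta> (Suc (k n)) \<le> cf_q \<theta> (k (Suc n))"
    using subseq_exists[OF growth] by blast
  have sT: "cf_q \<theta> (k n) \<le> cf_q \<theta> (Suc (k n))" for n
  proof -
    have "cf_q \<theta> (k n) < 2 ^ cf_q \<theta> (k n)" by (rule less_exp)
    also have "\<dots> \<le> 2 ^ ((n+3) * cf_q \<theta> (k n))" by (intro power_increasing) auto
    also have "\<dots> \<le> cf_q \<theta> (Suc (k n))" using kP by blast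
    finally show ?thesis by simp
  qed
  have Tp: "0 < cf_q \<theta> (Suc (k n))" for n using kP sT[of n] by (metis le_trans not_gr0 not_one_le_zero)
  have Lk: "L \<theta> (\<lambda>n. cf_q \<theta> (k n)) (\<lambda>n. cf_q \<theta> (Suc (k n))) (\<lambda>n. Ec \<theta> (Suc (k n)))"
  proof (unfold_locales)
    fix n
    show "1 \<le> cf_q \<theta> (k n)" using kP by blast
    show "2 ^ ((n + 3) * cf_q \<theta> (k n)) \<le> cf_q \<theta> (Suc (k n))" using kP by blast
    show "cf_q \<theta> (Suc (k n)) \<le> cf_q \<theta> (k (Suc n))" using kP by blast
    show "real (cf_q \<theta> (k n)) * \<theta> - Ec \<theta> (Suc (k n)) \<in> \<int>" by (rule cf_approx(1)[OF irr Tp sT])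
    show "\<bar>Ec \<theta> (Suc (k n))\<bar> \<le> 1 / real (cf_q \<theta> (Suc (k n)))" by (rule cf_approx(2)[OF irr Tp sT])
    show "1 / (2 * real (cf_q \<theta> (Suc (k n)))) \<le> \<bar>Ec \<theta> (Suc (k n))\<bar>" by (rule cf_approx(3)[OF irr Tp sT])
  qed
  obtain E2 where E: "gdelta_in euclidean E2 \<and> closure E2 = UNIV \<and>
     (\<forall>u\<in>E2.
        (\<forall>z. summable (phi_term \<theta> (\<lambda>n. cf_q \<theta> (k n)) u z)) \<and>
        holo_aut_C2 (A_map \<theta> (\<lambda>n. cf_q \<theta> (k n)) u) \<and>
        A_map \<theta> (\<lambda>n. cf_q \<theta> (k n)) u ` (UNIV \<times> unit_disc) = UNIV \<times> unit_disc \<and>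
        (\<exists>\<Psi>. biholo2_on \<Psi> (UNIV \<times> unit_disc) \<and>
           (\<forall>p\<in>UNIV \<times> unit_disc. \<Psi> (A_map \<theta> (\<lambda>n. cf_q \<theta> (k n)) u p) = rot2 \<theta> (\<Psi> p))) \<and>
        (\<forall>p\<in>UNIV \<times> {z. norm z > 1}.
           \<not> bounded (range (\<lambda>N. (A_map \<theta> (\<lambda>n. cf_q \<theta> (k n)) u ^^ N) p)) \<and>
           (\<forall>\<epsilon>>0. \<exists>\<^sub>F N in sequentially. norm ((A_map \<theta> (\<lambda>n. cf_q \<theta> (k n)) u ^^ N) p - p) < \<epsilon>)) \<and>
        (\<forall>p\<in>UNIV \<times> {z. norm z > 1}. \<not> bounded (range (\<lambda>N.
           onorm (frechet_derivative (A_map \<theta> (\<lambda>n. cf_q \<theta> (k n)) u ^^ N) (at p))))))"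
    using L.main[OF Lk] by blast
  have S': "\<forall>p\<in>S. p \<in> UNIV \<times> {z. norm z > 1}" using S_sub by blast
  show ?thesis unfolding Let_def
    by (intro exI[of _ k] exI[of _ E2]) (use k E S' in blast)
qed


end
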